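(* Let $b^2>a^2>0$, $\theta\in[0,1]$, $s\ge0$, and let $u=(u^{(1)},u^{(2)},u^{(3)})^{\mathrm T}$ solve $$u_{tt}-a^2\Delta u-(b^2-a^2)\nabla\operatorname{div}u+(-\Delta)^{\theta}u_t=0\ \text{ on }(0,\infty)\times\mathbb{R}^3,\qquad (u,u_t)(0,\cdot)=(u_0,u_1),$$ with $(u_0^{(k)},u_1^{(k)})\in H^{s+1}(\mathbb{R}^3)\times H^s(\mathbb{R}^3)$ for $k=1,2,3$. Then for $k=1,2,3$ and $t\ge0$, $$\|u^{(k)}(t,\cdot)\|_{L^2}\lesssim(1+t)\sum_{j=1}^3\|(u_0^{(j)},u_1^{(j)})\|_{H^1\times L^2},$$ $$\||D|^{s+1}u^{(k)}(t,\cdot)\|_{L^2}+\||D|^su^{(k)}_t(t,\cdot)\|_{L^2}\lesssim(1+t)^{-\frac{s}{2\max\{1-\theta;\theta\}}}\sum_{j=1}^3\|(u_0^{(j)},u_1^{(j)})\|_{H^{s+1}\times H^s}.$$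
   Context: $(-\Delta)^\theta$ and $|D|^s$ are the Fourier multipliers with symbols $|\xi|^{2\theta}$ and $|\xi|^s$; $\|(f,g)\|_{H^{s+1}\times H^s}=\|f\|_{H^{s+1}}+\|g\|_{H^s}$. $\lesssim$ hides a constant independent of $t$ and data. *)

theory Defs
  imports "HOL-Analysis.Analysis"
begin

text \<open>Everything is stated on the Fourier side (Plancherel): a function
  on the physical space R^3 is represented by its Fourier transform, a function
  of the frequency variable xi :: real^3.  Normalisation constants of the
  Fourier transform are irrelevant because of the unspecified constant.\<close>

text \<open>Symbol |xi|^r of a homogeneous Fourier multiplier, with the convention
  |xi|^0 = 1 (identity operator), also at xi = 0.\<close>
definition sym_pow :: "real \<Rightarrow> real^3 \<Rightarrow> real" where
  "sym_pow r \<xi> = (if r = 0 then 1 else norm \<xi> powr r)"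

definition in_Hs :: "real \<Rightarrow> (real^3 \<Rightarrow> complex) \<Rightarrow> bool" where
  "in_Hs s fh \<longleftrightarrow> fh \<in> borel_measurable lborel \<and>
     integrable lborel (\<lambda>\<xi>. (1 + (norm \<xi>)\<^sup>2) powr s * (cmod (fh \<xi>))\<^sup>2)"

definition Hs_norm :: "real \<Rightarrow> (real^3 \<Rightarrow> complex) \<Rightarrow> real" where
  "Hs_norm s fh = sqrt (LINT \<xi>|lborel. (1 + (norm \<xi>)\<^sup>2) powr s * (cmod (fh \<xi>))\<^sup>2)"

definition in_dotHs :: "real \<Rightarrow> (real^3 \<Rightarrow> complex) \<Rightarrow> bool" where
  "in_dotHs s fh \<longleftrightarrow> fh \<in> borel_measurable lborel \<and>
     integrable lborel (\<lambda>\<xi>. (sym_pow s \<xi>)\<^sup>2 * (cmod (fh \<xi>))\<^sup>2)"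

definition D_norm :: "real \<Rightarrow> (real^3 \<Rightarrow> complex) \<Rightarrow> real" where
  "D_norm s fh = sqrt (LINT \<xi>|lborel. (sym_pow s \<xi>)\<^sup>2 * (cmod (fh \<xi>))\<^sup>2)"

text \<open>Fourier symbol of the operator
  w |-> -a^2 Laplace w - (b^2-a^2) grad div w + (-Laplace)^theta v
  applied at frequency xi to the pair (w, v):
  a^2 |xi|^2 w + (b^2-a^2) xi (xi . w) + |xi|^(2 theta) v.\<close>
definition elastic_symbol ::
  "real \<Rightarrow> real \<Rightarrow> real \<Rightarrow> real^3 \<Rightarrow> complex^3 \<Rightarrow> complex^3 \<Rightarrow> complex^3" where
  "elastic_symbol a b \<theta> \<xi> w v =
     (\<chi> i. of_real (a\<^sup>2 * (norm \<xi>)\<^sup>2) * w $ i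
          + of_real (b\<^sup>2 - a\<^sup>2) * of_real (\<xi> $ i) * (\<Sum>j\<in>UNIV. of_real (\<xi> $ j) * w $ j)
          + of_real (sym_pow (2 * \<theta>) \<xi>) * v $ i)"

text \<open>U t xi (with time derivative V t xi) is the Fourier transform in x of a
  solution u(t,x) of
  u_tt - a^2 Laplace u - (b^2-a^2) grad div u + (-Laplace)^theta u_t = 0,
  (u, u_t)(0) = (u0, u1), where U0, U1 are the Fourier transforms of u0, u1:
  for each frequency the ODE holds for all t \<ge> 0 (one-sided at t = 0).\<close>
definition is_solution ::
  "real \<Rightarrow> real \<Rightarrow> real \<Rightarrow> (real^3 \<Rightarrow> complex^3) \<Rightarrow> (real^3 \<Rightarrow> complex^3)
   \<Rightarrow> (real \<Rightarrow> real^3 \<Rightarrow> complex^3) \<Rightarrow> (real \<Rightarrow> real^3 \<Rightarrow> complex^3) \<Rightarrow> bool" where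
  "is_solution a b \<theta> U0 U1 U V \<longleftrightarrow>
     (\<forall>\<xi>. U 0 \<xi> = U0 \<xi> \<and> V 0 \<xi> = U1 \<xi> \<and>
        (\<forall>t\<ge>0. ((\<lambda>\<tau>. U \<tau> \<xi>) has_vector_derivative V t \<xi>) (at t within {0..}) \<and>
                ((\<lambda>\<tau>. V \<tau> \<xi>) has_vector_derivative
                    - elastic_symbol a b \<theta> \<xi> (U t \<xi>) (V t \<xi>)) (at t within {0..})))"

end

theory Submission
  imports Defs
begin


definition cc :: "real \<Rightarrow> real \<Rightarrow> real" where
  "cc D t = (if 0 < D then cosh (sqrt D * t) else if D = 0 then 1 else cos (sqrt (-D) * t))"
definition ss :: "real \<Rightarrow> real \<Rightarrow> real" where
  "ss D t = (if 0 < D then sinh (sqrt D * t) / sqrt D else if D = 0 then t else sin (sqrt (-D) * t) / sqrt (-D))"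

lemma neg_sq_aux: "q > 0 \<Longrightarrow> D = - (q * q) \<Longrightarrow> D * (x / q) = - x * (q::real)"
  by (simp add: field_simps)

lemma cc_deriv: "(cc D has_real_derivative D * ss D t) (at t within S)"
proof -
  consider "0 < D" | "D = 0" | "D < 0" by linarith
  then show ?thesis
  proof cases
    case 1
    have e: "D * (sinh (sqrt D * t) / sqrt D) = sinh (sqrt D * t) * sqrt D"
      using 1 by (simp add: field_simps)
    have "((\<lambda>t. cosh (sqrt D * t)) has_real_derivative sinh (sqrt D * t) * sqrt D) (at t within S)"
      by (auto intro!: derivative_eq_intros)
    then show ?thesis using 1 e unfolding cc_def ss_def by simp
  next
    case 2 then show ?thesis unfolding cc_def ss_def by (auto intro!: derivative_eq_intros)
  next
    case 3
    have e: "D * (sin (sqrt (-D) * t) / sqrt (-D)) = - sin (sqrt (-D) * t) * sqrt (-D)"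
    proof -
      show ?thesis by (rule neg_sq_aux) (use 3 in auto)
    qed
    have "((\<lambda>t. cos (sqrt (-D) * t)) has_real_derivative - sin (sqrt (-D) * t) * sqrt (-D)) (at t within S)"
      by (auto intro!: derivative_eq_intros)
    then show ?thesis using 3 e unfolding cc_def ss_def by simp
  qed
qed

lemma ss_deriv: "(ss D has_real_derivative cc D t) (at t within S)"
proof -
  consider "0 < D" | "D = 0" | "D < 0" by linarith
  then show ?thesis
  proof cases
    case 1
    have "((\<lambda>t. sinh (sqrt D * t) / sqrt D) has_real_derivative cosh (sqrt D * t) * sqrt D / sqrt D) (at t within S)"
      using 1 by (auto intro!: derivative_eq_intros simp: mult.assoc)
    moreover have "cosh (sqrt D * t) * sqrt D / sqrt D = cosh (sqrt D * t)" using 1 by simp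
    ultimately show ?thesis using 1 unfolding cc_def ss_def by simp
  next
    case 2 then show ?thesis unfolding cc_def ss_def by (auto intro!: derivative_eq_intros)
  next
    case 3
    have "((\<lambda>t. sin (sqrt (-D) * t) / sqrt (-D)) has_real_derivative cos (sqrt (-D) * t) * sqrt (-D) / sqrt (-D)) (at t within S)"
      using 3 by (auto intro!: derivative_eq_intros simp: mult.assoc)
    then show ?thesis using 3 unfolding cc_def ss_def by simp
  qed
qed

lemma cc0 [simp]: "cc D 0 = 1" by (simp add: cc_def)
lemma ss0 [simp]: "ss D 0 = 0" by (simp add: ss_def)

lemma cc_meas [measurable]: assumes [measurable]: "g \<in> borel_measurable M" shows "(\<lambda>x. cc (g x) t) \<in> borel_measurable M"
  unfolding cc_def cosh_def by measurable
lemma ss_meas [measurable]: assumes [measurable]: "g \<in> borel_measurable M" shows "(\<lambda>x. ss (g x) t) \<in> borel_measurable M"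
  unfolding ss_def sinh_def by measurable

definition phi :: "real \<Rightarrow> real \<Rightarrow> real \<Rightarrow> real \<Rightarrow> real \<Rightarrow> real" where
  "phi d D A B t = exp (- d * t / 2) * (A * cc D t + B * ss D t)"

lemma phi_deriv: "(phi d D A B has_real_derivative phi d D (B - d/2*A) (D*A - d/2*B) t) (at t within S)"
proof -
  have "((\<lambda>t. exp (- d * t / 2) * (A * cc D t + B * ss D t)) has_real_derivative
     exp (- d * t / 2) * (- d / 2) * (A * cc D t + B * ss D t) + exp (- d * t / 2) * (A * (D * ss D t) + B * cc D t)) (at t within S)"
    by (auto intro!: derivative_eq_intros cc_deriv ss_deriv simp: field_simps)
  then show ?thesis unfolding phi_def by (rule DERIV_cong) (simp add: field_simps)
qed

lemma phi0: "phi d D A B 0 = A" by (simp add: phi_def)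

lemma phi_meas [measurable]: assumes [measurable]: "d \<in> borel_measurable M" "D \<in> borel_measurable M"
   "A \<in> borel_measurable M" "B \<in> borel_measurable M" shows "(\<lambda>x. phi (d x) (D x) (A x) (B x) t) \<in> borel_measurable M"
  unfolding phi_def by measurable


lemma nonincr:
  fixes g g' :: "real \<Rightarrow> real"
  assumes der: "\<And>t. t \<ge> 0 \<Longrightarrow> (g has_real_derivative g' t) (at t within {0..})"
    and neg: "\<And>t. t \<ge> 0 \<Longrightarrow> g' t \<le> 0" and t: "t \<ge> 0"
  shows "g t \<le> g 0"
proof -
  have "\<exists>x\<in>{0..t}. g t - g 0 = (\<lambda>h. g' x * h) (t - 0)"
  proof (rule mvt_very_simple[OF t])
    fix x assume x: "0 \<le> x" "x \<le> t"
    have "(g has_real_derivative g' x) (at x within {0..t})"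
      by (rule DERIV_subset[OF der[OF x(1)]]) auto
    then show "(g has_derivative (\<lambda>h. g' x * h)) (at x within {0..t})"
      by (simp add: has_field_derivative_def)
  qed
  then obtain x where "x \<in> {0..t}" "g t - g 0 = g' x * t" by auto
  moreover have "g' x \<le> 0" using neg \<open>x \<in> {0..t}\<close> by auto
  ultimately show ?thesis using t by (smt (verit) mult_nonpos_nonneg)
qed

lemma inner_vd:
  assumes "(y has_vector_derivative Y) (at t within S)" "(z has_vector_derivative Z) (at t within S)"
  shows "((\<lambda>t. y t \<bullet> z t) has_real_derivative (Y \<bullet> z t + y t \<bullet> Z)) (at t within S)"
proof -
  have "((\<lambda>t. y t \<bullet> z t) has_derivative (\<lambda>h. y t \<bullet> (h *\<^sub>R Z) + (h *\<^sub>R Y) \<bullet> z t)) (at t within S)"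
    using assms unfolding has_vector_derivative_def by (intro has_derivative_inner)
  then show ?thesis unfolding has_field_derivative_def
    by (rule has_derivative_eq_rhs) (auto simp: fun_eq_iff algebra_simps)
qed

lemma amgm2: "2 * (p * q) \<le> p\<^sup>2 + (q::real)\<^sup>2"
proof -
  have "0 \<le> (p - q)\<^sup>2" by simp
  then show ?thesis by (simp add: power2_diff)
qed

lemma lyap_a2:
  fixes nf ny x \<kappa> \<delta> :: real
  assumes "0 \<le> nf" "0 \<le> ny" "\<bar>x\<bar> \<le> ny * nf" "0 \<le> \<delta>" "\<delta>\<^sup>2 \<le> \<kappa>"
  shows "\<delta>*\<bar>x\<bar> \<le> (nf\<^sup>2 + \<kappa>*ny\<^sup>2)/2"
proof -
  have "\<delta>*\<bar>x\<bar> \<le> \<delta>*(ny*nf)" using assms by (intro mult_left_mono) auto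
  also have "2 * (nf * (\<delta>*ny)) \<le> nf\<^sup>2 + (\<delta>*ny)\<^sup>2" by (rule amgm2)
  then have "\<delta>*(ny*nf) \<le> (nf\<^sup>2 + (\<delta>*ny)\<^sup>2)/2" by (simp add: algebra_simps)
  also have "(\<delta>*ny)\<^sup>2 \<le> \<kappa>*ny\<^sup>2" using assms by (simp add: power_mult_distrib mult_right_mono)
  finally show ?thesis by simp
qed

lemma lyap_arith:
  fixes nf ny x d \<kappa> \<delta> :: real
  assumes "0 \<le> nf" "0 \<le> ny" "\<bar>x\<bar> \<le> ny * nf" "0 \<le> \<kappa>" "0 \<le> d" "0 \<le> \<delta>"
    "\<delta>\<^sup>2 \<le> \<kappa>" "2 * \<delta> \<le> d" "\<delta> * d \<le> \<kappa>"
  shows "-2*d*nf\<^sup>2 + \<delta>*nf\<^sup>2 - \<delta>*\<kappa>*ny\<^sup>2 - \<delta>*d*x + (\<delta>/3)*(nf\<^sup>2 + \<kappa>*ny\<^sup>2 + \<delta>*x) \<le> 0"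
proof -
  have a1: "\<delta>*d*\<bar>x\<bar> \<le> d/2*nf\<^sup>2 + \<delta>*\<kappa>/2*ny\<^sup>2"
  proof -
    have "\<delta>*d*\<bar>x\<bar> \<le> d*(\<delta>*(ny*nf))" using assms by (simp add: mult_left_mono mult.assoc mult.left_commute)
    also have "2 * (nf * (\<delta>*ny)) \<le> nf\<^sup>2 + (\<delta>*ny)\<^sup>2" by (rule amgm2)
    then have "\<delta>*(ny*nf) \<le> (nf\<^sup>2 + (\<delta>*ny)\<^sup>2)/2" by (simp add: algebra_simps)
    then have "d*(\<delta>*(ny*nf)) \<le> d*((nf\<^sup>2 + (\<delta>*ny)\<^sup>2)/2)" by (rule mult_left_mono) (use assms in auto)
    also have "d*((nf\<^sup>2 + (\<delta>*ny)\<^sup>2)/2) = d/2*nf\<^sup>2 + ((\<delta>*d)*\<delta>)/2*ny\<^sup>2" by (simp add: power2_eq_square algebra_simps)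
    also have "(\<delta>*d)*\<delta> \<le> \<kappa>*\<delta>" using assms by (simp add: mult_right_mono)
    then have "d/2*nf\<^sup>2 + ((\<delta>*d)*\<delta>)/2*ny\<^sup>2 \<le> d/2*nf\<^sup>2 + (\<kappa>*\<delta>)/2*ny\<^sup>2"
      by (intro add_left_mono mult_right_mono divide_right_mono) (use assms in auto)
    finally show ?thesis by (simp add: mult.commute)
  qed
  have a2: "\<delta>*\<bar>x\<bar> \<le> (nf\<^sup>2 + \<kappa>*ny\<^sup>2)/2" by (rule lyap_a2) (use assms in auto)
  have "- (\<delta>*d)*x \<le> (\<delta>*d)*\<bar>x\<bar>"
  proof -
    have "-x \<le> \<bar>x\<bar>" by simp
    then show ?thesis using assms by (metis minus_mult_commute mult_left_mono zero_le_mult_iff)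
  qed
  moreover have "(\<delta>/3)*(\<delta>*x) \<le> (\<delta>/3)*((nf\<^sup>2 + \<kappa>*ny\<^sup>2)/2)"
  proof -
    have "\<delta>*x \<le> \<delta>*\<bar>x\<bar>" using assms by (intro mult_left_mono) auto
    then show ?thesis using a2 assms by (intro mult_left_mono) auto
  qed
  moreover have "0 \<le> \<delta>*\<kappa>*ny\<^sup>2" using assms by simp
  moreover have "\<delta> * nf\<^sup>2 \<le> d * nf\<^sup>2" using assms by (intro mult_right_mono) auto
  ultimately show ?thesis using a1 by (simp add: algebra_simps)
qed


lemma scalar_decay:
  fixes y f :: "real \<Rightarrow> complex" and \<kappa> d \<delta> t :: real
  assumes dy: "\<And>t. t \<ge> 0 \<Longrightarrow> (y has_vector_derivative f t) (at t within {0..})"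
    and df: "\<And>t. t \<ge> 0 \<Longrightarrow> (f has_vector_derivative - (of_real \<kappa> * y t + of_real d * f t)) (at t within {0..})"
    and c: "0 \<le> \<kappa>" "0 \<le> d" "0 \<le> \<delta>" "\<delta>\<^sup>2 \<le> \<kappa>" "2 * \<delta> \<le> d" "\<delta> * d \<le> \<kappa>"
    and t: "t \<ge> 0"
  shows "(cmod (f t))\<^sup>2 + \<kappa> * (cmod (y t))\<^sup>2 \<le> 3 * exp (- \<delta> * t / 3) * ((cmod (f 0))\<^sup>2 + \<kappa> * (cmod (y 0))\<^sup>2)"
proof -
  define F where "F t = f t \<bullet> f t + \<kappa> * (y t \<bullet> y t) + \<delta> * (y t \<bullet> f t)" for t
  define E where "E t = (cmod (f t))\<^sup>2 + \<kappa> * (cmod (y t))\<^sup>2" for t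
  define F' where "F' t = -2*d*(cmod (f t))\<^sup>2 + \<delta>*(cmod (f t))\<^sup>2 - \<delta>*\<kappa>*(cmod (y t))\<^sup>2 - \<delta>*d*(y t \<bullet> f t)" for t
  have cs: "\<bar>y t \<bullet> f t\<bar> \<le> cmod (y t) * cmod (f t)" for t by (rule Cauchy_Schwarz_ineq2)
  have dF: "(F has_real_derivative F' t) (at t within {0..})" if "t \<ge> 0" for t
  proof -
    have fe: "- (of_real \<kappa> * y t + of_real d * f t) = - (\<kappa> *\<^sub>R y t + d *\<^sub>R f t)"
      by (simp add: scaleR_conv_of_real)
    note df' = df[OF that, unfolded fe]
    note dy' = dy[OF that]
    note d1 = inner_vd[OF df' df']
    note d2 = inner_vd[OF dy' dy']
    note d3 = inner_vd[OF dy' df']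
    have "(F has_real_derivative
      ((- (\<kappa> *\<^sub>R y t + d *\<^sub>R f t)) \<bullet> f t + f t \<bullet> (- (\<kappa> *\<^sub>R y t + d *\<^sub>R f t)))
      + \<kappa> * (f t \<bullet> y t + y t \<bullet> f t) + \<delta> * (f t \<bullet> f t + y t \<bullet> (- (\<kappa> *\<^sub>R y t + d *\<^sub>R f t)))) (at t within {0..})"
      unfolding F_def by (intro DERIV_add DERIV_cmult d1 d2 d3)
    then show ?thesis
      by (rule DERIV_cong) (simp add: F'_def inner_add_left inner_add_right inner_commute power2_norm_eq_inner algebra_simps)
  qed
  define G where "G t = exp (\<delta>*t/3) * F t" for t
  have dG: "(G has_real_derivative exp (\<delta>*t/3) * (\<delta>/3 * F t + F' t)) (at t within {0..})" if "t \<ge> 0" for t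
  proof -
    have "((\<lambda>t. exp (\<delta>*t/3)) has_real_derivative exp (\<delta>*t/3) * (\<delta>/3)) (at t within {0..})"
      by (auto intro!: derivative_eq_intros)
    from DERIV_mult[OF this dF[OF that]] show ?thesis unfolding G_def
      by (rule DERIV_cong) (simp add: algebra_simps)
  qed
  have Gneg: "exp (\<delta>*t/3) * (\<delta>/3 * F t + F' t) \<le> 0" for t
  proof -
    have "\<delta>/3 * F t + F' t \<le> 0"
      using lyap_arith[OF norm_ge_zero norm_ge_zero cs[of t] c(1,2,3,4,5,6)]
      by (simp add: F_def F'_def power2_norm_eq_inner[symmetric] algebra_simps)
    then show ?thesis by (simp add: mult_nonneg_nonpos)
  qed
  have Gt: "G t \<le> G 0" by (rule nonincr[OF dG Gneg t])
  have lowF: "E s \<le> 2 * F s" for s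
  proof -
    have "\<delta> * \<bar>y s \<bullet> f s\<bar> \<le> E s / 2"
      using lyap_a2[OF norm_ge_zero norm_ge_zero cs[of s] c(3,4)] by (simp add: E_def)
    moreover have "- (\<delta> * \<bar>y s \<bullet> f s\<bar>) \<le> \<delta> * (y s \<bullet> f s)"
      using c(3) by (metis abs_ge_minus_self minus_mult_right mult_left_mono minus_le_iff)
    ultimately show ?thesis by (simp add: E_def F_def power2_norm_eq_inner[symmetric])
  qed
  have upF: "F 0 \<le> 3/2 * E 0"
  proof -
    have "\<delta> * \<bar>y 0 \<bullet> f 0\<bar> \<le> E 0 / 2"
      using lyap_a2[OF norm_ge_zero norm_ge_zero cs[of 0] c(3,4)] by (simp add: E_def)
    moreover have "\<delta> * (y 0 \<bullet> f 0) \<le> \<delta> * \<bar>y 0 \<bullet> f 0\<bar>"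
      using c(3) by (simp add: mult_left_mono)
    ultimately show ?thesis by (simp add: E_def F_def power2_norm_eq_inner[symmetric])
  qed
  have "E t \<le> 2 * F t" by (rule lowF)
  also have "F t = exp (- \<delta>*t/3) * G t" by (simp add: G_def exp_minus_inverse field_simps exp_minus)
  also have "2 * (exp (- \<delta>*t/3) * G t) \<le> 2 * (exp (- \<delta>*t/3) * G 0)"
    using Gt by simp
  also have "G 0 = F 0" by (simp add: G_def)
  also have "2 * (exp (- \<delta>*t/3) * F 0) \<le> 2 * (exp (- \<delta>*t/3) * (3/2 * E 0))"
    using upF by simp
  finally show ?thesis by (simp add: E_def algebra_simps)
qed


lemma scalar_unique:
  fixes y f :: "real \<Rightarrow> complex" and \<kappa> d t :: real
  assumes dy: "\<And>t. t \<ge> 0 \<Longrightarrow> (y has_vector_derivative f t) (at t within {0..})"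
    and df: "\<And>t. t \<ge> 0 \<Longrightarrow> (f has_vector_derivative - (of_real \<kappa> * y t + of_real d * f t)) (at t within {0..})"
    and c: "0 < \<kappa>" "0 \<le> d" and z: "y 0 = 0" "f 0 = 0" and t: "t \<ge> 0"
  shows "y t = 0 \<and> f t = 0"
proof -
  have "(cmod (f t))\<^sup>2 + \<kappa> * (cmod (y t))\<^sup>2 \<le> 3 * exp (- 0 * t / 3) * ((cmod (f 0))\<^sup>2 + \<kappa> * (cmod (y 0))\<^sup>2)"
    by (rule scalar_decay[OF dy df]) (use c t in auto)
  then have "(cmod (f t))\<^sup>2 + \<kappa> * (cmod (y t))\<^sup>2 \<le> 0" using z by simp
  moreover have "0 \<le> (cmod (f t))\<^sup>2" "0 \<le> \<kappa> * (cmod (y t))\<^sup>2" using c by auto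
  ultimately have "(cmod (f t))\<^sup>2 = 0" "\<kappa> * (cmod (y t))\<^sup>2 = 0" by linarith+
  then show ?thesis using c by auto
qed

definition Ysol :: "real \<Rightarrow> real \<Rightarrow> complex \<Rightarrow> complex \<Rightarrow> real \<Rightarrow> complex" where
  "Ysol d \<kappa> y0 y1 t = phi d (d\<^sup>2/4 - \<kappa>) 1 (d/2) t *\<^sub>R y0 + phi d (d\<^sup>2/4 - \<kappa>) 0 1 t *\<^sub>R y1"
definition Yder :: "real \<Rightarrow> real \<Rightarrow> complex \<Rightarrow> complex \<Rightarrow> real \<Rightarrow> complex" where
  "Yder d \<kappa> y0 y1 t = phi d (d\<^sup>2/4 - \<kappa>) 0 (-\<kappa>) t *\<^sub>R y0 + phi d (d\<^sup>2/4 - \<kappa>) 1 (-d/2) t *\<^sub>R y1"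

lemma Ysol0: "Ysol d \<kappa> y0 y1 0 = y0" by (simp add: Ysol_def phi0)
lemma Yder0: "Yder d \<kappa> y0 y1 0 = y1" by (simp add: Yder_def phi0)

lemma Ysol_deriv: "(Ysol d \<kappa> y0 y1 has_vector_derivative Yder d \<kappa> y0 y1 t) (at t within S)"
proof -
  let ?D = "d\<^sup>2/4 - \<kappa>"
  have e1: "phi d ?D (d/2 - d/2*1) (?D*1 - d/2*(d/2)) t = phi d ?D 0 (-\<kappa>) t"
    by (simp add: power2_eq_square)
  have e2: "phi d ?D (1 - d/2*0) (?D*0 - d/2*1) t = phi d ?D 1 (-d/2) t" by simp
  have "((\<lambda>t. phi d ?D 1 (d/2) t *\<^sub>R y0 + phi d ?D 0 1 t *\<^sub>R y1) has_vector_derivative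
     (phi d ?D 1 (d/2) t *\<^sub>R 0 + phi d ?D (d/2 - d/2*1) (?D*1 - d/2*(d/2)) t *\<^sub>R y0)
     + (phi d ?D 0 1 t *\<^sub>R 0 + phi d ?D (1 - d/2*0) (?D*0 - d/2*1) t *\<^sub>R y1)) (at t within S)"
    by (intro has_vector_derivative_add has_vector_derivative_scaleR phi_deriv has_vector_derivative_const)
  then show ?thesis unfolding Ysol_def Yder_def e1 e2 by simp
qed

lemma phi_lin: "phi d D A B t = A * phi d D 1 0 t + B * phi d D 0 1 t"
  by (simp add: phi_def algebra_simps)

lemma aux_id: "(-(\<kappa>*a1 + d*a2)) *\<^sub>R y0 + (-(\<kappa>*b1 + d*b2)) *\<^sub>R y1 =
   -(of_real \<kappa> * (a1 *\<^sub>R y0 + b1 *\<^sub>R y1) + of_real d * (a2 *\<^sub>R y0 + b2 *\<^sub>R (y1::complex)))"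
  by (simp add: scaleR_conv_of_real algebra_simps)

lemma Yder_deriv: "(Yder d \<kappa> y0 y1 has_vector_derivative - (of_real \<kappa> * Ysol d \<kappa> y0 y1 t + of_real d * Yder d \<kappa> y0 y1 t)) (at t within S)"
proof -
  let ?D = "d\<^sup>2/4 - \<kappa>"
  have eq1: "phi d ?D (-\<kappa> - d/2*0) (?D*0 - d/2*(-\<kappa>)) t = - (\<kappa> * phi d ?D 1 (d/2) t + d * phi d ?D 0 (-\<kappa>) t)"
    by (subst (1 2 3) phi_lin) (simp add: algebra_simps)
  have eq2: "phi d ?D (-d/2 - d/2*1) (?D*1 - d/2*(-d/2)) t = - (\<kappa> * phi d ?D 0 1 t + d * phi d ?D 1 (-d/2) t)"
    by (subst (1 2 3) phi_lin) (simp add: algebra_simps power2_eq_square)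
  have "((\<lambda>t. phi d ?D 0 (-\<kappa>) t *\<^sub>R y0 + phi d ?D 1 (-d/2) t *\<^sub>R y1) has_vector_derivative
     (phi d ?D 0 (-\<kappa>) t *\<^sub>R 0 + phi d ?D (-\<kappa> - d/2*0) (?D*0 - d/2*(-\<kappa>)) t *\<^sub>R y0)
     + (phi d ?D 1 (-d/2) t *\<^sub>R 0 + phi d ?D (-d/2 - d/2*1) (?D*1 - d/2*(-d/2)) t *\<^sub>R y1)) (at t within S)"
    by (intro has_vector_derivative_add has_vector_derivative_scaleR phi_deriv has_vector_derivative_const)
  then have "((\<lambda>t. phi d ?D 0 (-\<kappa>) t *\<^sub>R y0 + phi d ?D 1 (-d/2) t *\<^sub>R y1) has_vector_derivative
     (- (\<kappa> * phi d ?D 1 (d/2) t + d * phi d ?D 0 (-\<kappa>) t)) *\<^sub>R y0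
     + (- (\<kappa> * phi d ?D 0 1 t + d * phi d ?D 1 (-d/2) t)) *\<^sub>R y1) (at t within S)"
    unfolding eq1 eq2 by simp
  then show ?thesis unfolding Ysol_def Yder_def aux_id .
qed

lemma scalar_repr:
  fixes y f :: "real \<Rightarrow> complex" and \<kappa> d t :: real
  assumes dy: "\<And>t. t \<ge> 0 \<Longrightarrow> (y has_vector_derivative f t) (at t within {0..})"
    and df: "\<And>t. t \<ge> 0 \<Longrightarrow> (f has_vector_derivative - (of_real \<kappa> * y t + of_real d * f t)) (at t within {0..})"
    and c: "0 < \<kappa>" "0 \<le> d" and t: "t \<ge> 0"
  shows "y t = Ysol d \<kappa> (y 0) (f 0) t \<and> f t = Yder d \<kappa> (y 0) (f 0) t"
proof -
  let ?Y = "Ysol d \<kappa> (y 0) (f 0)" and ?F = "Yder d \<kappa> (y 0) (f 0)"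
  have "(\<lambda>t. y t - ?Y t) t = 0 \<and> (\<lambda>t. f t - ?F t) t = 0"
  proof (rule scalar_unique[where \<kappa>=\<kappa> and d=d])
    fix s :: real assume s: "s \<ge> 0"
    show "((\<lambda>t. y t - ?Y t) has_vector_derivative (\<lambda>t. f t - ?F t) s) (at s within {0..})"
      by (intro has_vector_derivative_diff dy s Ysol_deriv)
    have "((\<lambda>t. f t - ?F t) has_vector_derivative
       (- (of_real \<kappa> * y s + of_real d * f s)) - (- (of_real \<kappa> * ?Y s + of_real d * ?F s))) (at s within {0..})"
      by (intro has_vector_derivative_diff df s Yder_deriv)
    then show "((\<lambda>t. f t - ?F t) has_vector_derivative - (of_real \<kappa> * (\<lambda>t. y t - ?Y t) s + of_real d * (\<lambda>t. f t - ?F t) s)) (at s within {0..})"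
      by (rule has_vector_derivative_eq_rhs) (simp add: algebra_simps)
  qed (use c t in \<open>auto simp: Ysol0 Yder0\<close>)
  then show ?thesis by simp
qed


definition Pxi :: "real^3 \<Rightarrow> complex^3 \<Rightarrow> complex" where
  "Pxi \<xi> w = (\<Sum>j\<in>UNIV. of_real (\<xi>$j) * w$j)"

lemma comp_vd: "(u has_vector_derivative v) F \<Longrightarrow> ((\<lambda>t. u t $ j) has_vector_derivative v $ j) F"
  by (rule bounded_linear.has_vector_derivative[OF bounded_linear_vec_nth])

lemma Pxi_vd: "(u has_vector_derivative v) F \<Longrightarrow> ((\<lambda>t. Pxi \<xi> (u t)) has_vector_derivative Pxi \<xi> v) F"
  unfolding Pxi_def
  by (intro has_vector_derivative_sum bounded_linear.has_vector_derivative[OF bounded_linear_mult_right] comp_vd)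

lemma norm_sq_sum: "(norm (\<xi>::real^3))\<^sup>2 = (\<Sum>j\<in>UNIV. (\<xi>$j) * (\<xi>$j))"
  by (simp add: power2_norm_eq_inner inner_vec_def)

lemma elastic_comp: "elastic_symbol a b \<theta> \<xi> w v $ i = of_real (a\<^sup>2 * (norm \<xi>)\<^sup>2) * w$i
   + of_real (b\<^sup>2 - a\<^sup>2) * of_real (\<xi>$i) * Pxi \<xi> w + of_real (sym_pow (2*\<theta>) \<xi>) * v$i"
  by (simp add: elastic_symbol_def Pxi_def)

lemma Pxi_elastic: "Pxi \<xi> (elastic_symbol a b \<theta> \<xi> w v) = of_real (b\<^sup>2 * (norm \<xi>)\<^sup>2) * Pxi \<xi> w
   + of_real (sym_pow (2*\<theta>) \<xi>) * Pxi \<xi> v"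
proof -
  have ss: "(\<Sum>i\<in>UNIV. of_real (\<xi>$i) * of_real (\<xi>$i) :: complex) = of_real ((norm \<xi>)\<^sup>2)"
    by (simp add: norm_sq_sum)
  have "Pxi \<xi> (elastic_symbol a b \<theta> \<xi> w v) = (\<Sum>i\<in>UNIV. of_real (a\<^sup>2 * (norm \<xi>)\<^sup>2) * (of_real (\<xi>$i) * w$i)
     + (of_real (b\<^sup>2 - a\<^sup>2) * Pxi \<xi> w) * (of_real (\<xi>$i) * of_real (\<xi>$i)) + of_real (sym_pow (2*\<theta>) \<xi>) * (of_real (\<xi>$i) * v$i))"
    unfolding Pxi_def[of \<xi> "elastic_symbol a b \<theta> \<xi> w v"] elastic_comp
    by (rule sum.cong) (simp_all add: algebra_simps)
  also have "\<dots> = of_real (a\<^sup>2 * (norm \<xi>)\<^sup>2) * Pxi \<xi> w + (of_real (b\<^sup>2 - a\<^sup>2) * Pxi \<xi> w) * of_real ((norm \<xi>)\<^sup>2)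
     + of_real (sym_pow (2*\<theta>) \<xi>) * Pxi \<xi> v"
    unfolding sum.distrib sum_distrib_left[symmetric] ss by (simp add: Pxi_def)
  also have "\<dots> = of_real (b\<^sup>2 * (norm \<xi>)\<^sup>2) * Pxi \<xi> w + of_real (sym_pow (2*\<theta>) \<xi>) * Pxi \<xi> v"
    by (simp add: algebra_simps)
  finally show ?thesis .
qed

lemma modes:
  fixes u v :: "real \<Rightarrow> complex^3"
  assumes du: "\<And>t. t \<ge> 0 \<Longrightarrow> (u has_vector_derivative v t) (at t within {0..})"
    and dv: "\<And>t. t \<ge> 0 \<Longrightarrow> (v has_vector_derivative - elastic_symbol a b \<theta> \<xi> (u t) (v t)) (at t within {0..})"
    and t: "t \<ge> 0"
  shows "((\<lambda>t. Pxi \<xi> (u t)) has_vector_derivative Pxi \<xi> (v t)) (at t within {0..})"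
    and "((\<lambda>t. Pxi \<xi> (v t)) has_vector_derivative
          - (of_real (b\<^sup>2 * (norm \<xi>)\<^sup>2) * Pxi \<xi> (u t) + of_real (sym_pow (2*\<theta>) \<xi>) * Pxi \<xi> (v t))) (at t within {0..})"
    and "((\<lambda>t. of_real ((norm \<xi>)\<^sup>2) * u t $ k - of_real (\<xi>$k) * Pxi \<xi> (u t)) has_vector_derivative
          (of_real ((norm \<xi>)\<^sup>2) * v t $ k - of_real (\<xi>$k) * Pxi \<xi> (v t))) (at t within {0..})"
    and "((\<lambda>t. of_real ((norm \<xi>)\<^sup>2) * v t $ k - of_real (\<xi>$k) * Pxi \<xi> (v t)) has_vector_derivative
          - (of_real (a\<^sup>2 * (norm \<xi>)\<^sup>2) * (of_real ((norm \<xi>)\<^sup>2) * u t $ k - of_real (\<xi>$k) * Pxi \<xi> (u t))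
             + of_real (sym_pow (2*\<theta>) \<xi>) * (of_real ((norm \<xi>)\<^sup>2) * v t $ k - of_real (\<xi>$k) * Pxi \<xi> (v t))))
          (at t within {0..})"
proof -
  show "((\<lambda>t. Pxi \<xi> (u t)) has_vector_derivative Pxi \<xi> (v t)) (at t within {0..})"
    by (rule Pxi_vd[OF du[OF t]])
  have "((\<lambda>t. Pxi \<xi> (v t)) has_vector_derivative Pxi \<xi> (- elastic_symbol a b \<theta> \<xi> (u t) (v t))) (at t within {0..})"
    by (rule Pxi_vd[OF dv[OF t]])
  moreover have "Pxi \<xi> (- w) = - Pxi \<xi> w" for w by (simp add: Pxi_def sum_negf)
  ultimately show P2: "((\<lambda>t. Pxi \<xi> (v t)) has_vector_derivative
          - (of_real (b\<^sup>2 * (norm \<xi>)\<^sup>2) * Pxi \<xi> (u t) + of_real (sym_pow (2*\<theta>) \<xi>) * Pxi \<xi> (v t))) (at t within {0..})"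
    by (simp add: Pxi_elastic)
  show "((\<lambda>t. of_real ((norm \<xi>)\<^sup>2) * u t $ k - of_real (\<xi>$k) * Pxi \<xi> (u t)) has_vector_derivative
          (of_real ((norm \<xi>)\<^sup>2) * v t $ k - of_real (\<xi>$k) * Pxi \<xi> (v t))) (at t within {0..})"
    by (intro has_vector_derivative_diff bounded_linear.has_vector_derivative[OF bounded_linear_mult_right]
        comp_vd du t Pxi_vd)
  have "((\<lambda>t. of_real ((norm \<xi>)\<^sup>2) * v t $ k - of_real (\<xi>$k) * Pxi \<xi> (v t)) has_vector_derivative
          (of_real ((norm \<xi>)\<^sup>2) * (- elastic_symbol a b \<theta> \<xi> (u t) (v t)) $ k - of_real (\<xi>$k) *
            (- (of_real (b\<^sup>2 * (norm \<xi>)\<^sup>2) * Pxi \<xi> (u t) + of_real (sym_pow (2*\<theta>) \<xi>) * Pxi \<xi> (v t)))))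
          (at t within {0..})"
    by (intro has_vector_derivative_diff bounded_linear.has_vector_derivative[OF bounded_linear_mult_right]
        comp_vd dv t P2)
  then show "((\<lambda>t. of_real ((norm \<xi>)\<^sup>2) * v t $ k - of_real (\<xi>$k) * Pxi \<xi> (v t)) has_vector_derivative
          - (of_real (a\<^sup>2 * (norm \<xi>)\<^sup>2) * (of_real ((norm \<xi>)\<^sup>2) * u t $ k - of_real (\<xi>$k) * Pxi \<xi> (u t))
             + of_real (sym_pow (2*\<theta>) \<xi>) * (of_real ((norm \<xi>)\<^sup>2) * v t $ k - of_real (\<xi>$k) * Pxi \<xi> (v t))))
          (at t within {0..})"
    by (rule has_vector_derivative_eq_rhs) (simp add: elastic_comp algebra_simps)
qed


lemma is_solutionD:
  assumes "is_solution a b \<theta> U0 U1 U V"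
  shows "U 0 \<xi> = U0 \<xi>" "V 0 \<xi> = U1 \<xi>"
    "\<And>t. t \<ge> 0 \<Longrightarrow> ((\<lambda>\<tau>. U \<tau> \<xi>) has_vector_derivative V t \<xi>) (at t within {0..})"
    "\<And>t. t \<ge> 0 \<Longrightarrow> ((\<lambda>\<tau>. V \<tau> \<xi>) has_vector_derivative - elastic_symbol a b \<theta> \<xi> (U t \<xi>) (V t \<xi>)) (at t within {0..})"
  using assms unfolding is_solution_def by auto

lemma sym_pow_nonneg: "0 \<le> sym_pow r \<xi>" by (simp add: sym_pow_def)

definition FU where
  "FU a b \<theta> U0 U1 t \<xi> k = (let rr = (norm \<xi>)\<^sup>2; dd = sym_pow (2*\<theta>) \<xi> in
     (Ysol dd (a\<^sup>2*rr) (of_real rr * U0 \<xi> $ k - of_real (\<xi>$k) * Pxi \<xi> (U0 \<xi>)) (of_real rr * U1 \<xi> $ k - of_real (\<xi>$k) * Pxi \<xi> (U1 \<xi>)) t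
      + of_real (\<xi>$k) * Ysol dd (b\<^sup>2*rr) (Pxi \<xi> (U0 \<xi>)) (Pxi \<xi> (U1 \<xi>)) t) / of_real rr)"
definition FV where
  "FV a b \<theta> U0 U1 t \<xi> k = (let rr = (norm \<xi>)\<^sup>2; dd = sym_pow (2*\<theta>) \<xi> in
     (Yder dd (a\<^sup>2*rr) (of_real rr * U0 \<xi> $ k - of_real (\<xi>$k) * Pxi \<xi> (U0 \<xi>)) (of_real rr * U1 \<xi> $ k - of_real (\<xi>$k) * Pxi \<xi> (U1 \<xi>)) t
      + of_real (\<xi>$k) * Yder dd (b\<^sup>2*rr) (Pxi \<xi> (U0 \<xi>)) (Pxi \<xi> (U1 \<xi>)) t) / of_real rr)"

lemma repr:
  assumes sol: "is_solution a b \<theta> U0 U1 U V" and ab: "a\<^sup>2 > 0" "b\<^sup>2 > 0" and xi: "\<xi> \<noteq> 0" and t: "t \<ge> 0"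
  shows "U t \<xi> $ k = FU a b \<theta> U0 U1 t \<xi> k \<and> V t \<xi> $ k = FV a b \<theta> U0 U1 t \<xi> k"
proof -
  let ?rr = "(norm \<xi>)\<^sup>2" and ?dd = "sym_pow (2*\<theta>) \<xi>"
  note S = is_solutionD[OF sol, where \<xi>=\<xi>]
  have rr: "?rr > 0" using xi by simp
  have dd: "?dd \<ge> 0" by (rule sym_pow_nonneg)
  note M = modes[where u="\<lambda>t. U t \<xi>" and v="\<lambda>t. V t \<xi>", OF S(3) S(4)]
  have Z: "of_real ?rr * U t \<xi> $ k - of_real (\<xi>$k) * Pxi \<xi> (U t \<xi>) =
      Ysol ?dd (a\<^sup>2*?rr) (of_real ?rr * U 0 \<xi> $ k - of_real (\<xi>$k) * Pxi \<xi> (U 0 \<xi>)) (of_real ?rr * V 0 \<xi> $ k - of_real (\<xi>$k) * Pxi \<xi> (V 0 \<xi>)) t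
    \<and> of_real ?rr * V t \<xi> $ k - of_real (\<xi>$k) * Pxi \<xi> (V t \<xi>) =
      Yder ?dd (a\<^sup>2*?rr) (of_real ?rr * U 0 \<xi> $ k - of_real (\<xi>$k) * Pxi \<xi> (U 0 \<xi>)) (of_real ?rr * V 0 \<xi> $ k - of_real (\<xi>$k) * Pxi \<xi> (V 0 \<xi>)) t"
    by (rule scalar_repr[where y="\<lambda>t. of_real ?rr * U t \<xi> $ k - of_real (\<xi>$k) * Pxi \<xi> (U t \<xi>)"
          and f="\<lambda>t. of_real ?rr * V t \<xi> $ k - of_real (\<xi>$k) * Pxi \<xi> (V t \<xi>)", OF M(3) M(4)])
       (use rr dd ab t in auto)
  have P: "Pxi \<xi> (U t \<xi>) = Ysol ?dd (b\<^sup>2*?rr) (Pxi \<xi> (U 0 \<xi>)) (Pxi \<xi> (V 0 \<xi>)) t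
    \<and> Pxi \<xi> (V t \<xi>) = Yder ?dd (b\<^sup>2*?rr) (Pxi \<xi> (U 0 \<xi>)) (Pxi \<xi> (V 0 \<xi>)) t"
    by (rule scalar_repr[where y="\<lambda>t. Pxi \<xi> (U t \<xi>)" and f="\<lambda>t. Pxi \<xi> (V t \<xi>)", OF M(1) M(2)])
       (use rr dd ab t in auto)
  have rr0: "(of_real ?rr :: complex) \<noteq> 0" using rr by simp
  have e: "x = (of_real ?rr * x - c * p + c * p) / of_real ?rr" for x c p :: complex
    using rr0 by (simp add: field_simps)
  have "U t \<xi> $ k = (of_real ?rr * U t \<xi> $ k - of_real (\<xi>$k) * Pxi \<xi> (U t \<xi>) + of_real (\<xi>$k) * Pxi \<xi> (U t \<xi>)) / of_real ?rr"
    by (rule e)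
  also have "\<dots> = FU a b \<theta> U0 U1 t \<xi> k" unfolding FU_def Let_def using Z P S(1) S(2) by simp
  moreover have "V t \<xi> $ k = (of_real ?rr * V t \<xi> $ k - of_real (\<xi>$k) * Pxi \<xi> (V t \<xi>) + of_real (\<xi>$k) * Pxi \<xi> (V t \<xi>)) / of_real ?rr"
    by (rule e)
  moreover have "\<dots> = FV a b \<theta> U0 U1 t \<xi> k" unfolding FV_def Let_def using Z P S(1) S(2) by simp
  ultimately show ?thesis by simp
qed


lemma Ysol_meas [measurable]:
  assumes [measurable]: "d \<in> borel_measurable M" "\<kappa> \<in> borel_measurable M" "y0 \<in> borel_measurable M" "y1 \<in> borel_measurable M"
  shows "(\<lambda>x. Ysol (d x) (\<kappa> x) (y0 x) (y1 x) t) \<in> borel_measurable M"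
  unfolding Ysol_def by measurable

lemma Yder_meas [measurable]:
  assumes [measurable]: "d \<in> borel_measurable M" "\<kappa> \<in> borel_measurable M" "y0 \<in> borel_measurable M" "y1 \<in> borel_measurable M"
  shows "(\<lambda>x. Yder (d x) (\<kappa> x) (y0 x) (y1 x) t) \<in> borel_measurable M"
  unfolding Yder_def by measurable

lemma sym_pow_meas [measurable]: "sym_pow r \<in> borel_measurable (lborel :: (real^3) measure)"
  unfolding sym_pow_def[abs_def] by measurable

lemma Pxi_meas [measurable]:
  assumes [measurable]: "\<And>j. (\<lambda>\<xi>. w \<xi> $ j) \<in> borel_measurable (lborel :: (real^3) measure)"
  shows "(\<lambda>\<xi>. Pxi \<xi> (w \<xi>)) \<in> borel_measurable (lborel :: (real^3) measure)"
  unfolding Pxi_def by measurable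

lemma FU_meas:
  assumes [measurable]: "\<And>j. (\<lambda>\<xi>. U0 \<xi> $ j) \<in> borel_measurable lborel" "\<And>j. (\<lambda>\<xi>. U1 \<xi> $ j) \<in> borel_measurable lborel"
  shows "(\<lambda>\<xi>. FU a b \<theta> U0 U1 t \<xi> k) \<in> borel_measurable lborel"
    "(\<lambda>\<xi>. FV a b \<theta> U0 U1 t \<xi> k) \<in> borel_measurable lborel"
  unfolding FU_def FV_def Let_def by measurable

lemma sol_meas:
  assumes sol: "is_solution a b \<theta> U0 U1 U V" and ab: "a\<^sup>2 > 0" "b\<^sup>2 > 0" and t: "t \<ge> 0"
    and m0: "\<And>j. (\<lambda>\<xi>. U0 \<xi> $ j) \<in> borel_measurable lborel" and m1: "\<And>j. (\<lambda>\<xi>. U1 \<xi> $ j) \<in> borel_measurable lborel"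
  shows "(\<lambda>\<xi>. U t \<xi> $ k) \<in> borel_measurable lborel" "(\<lambda>\<xi>. V t \<xi> $ k) \<in> borel_measurable lborel"
proof -
  note [measurable] = FU_meas[OF m0 m1]
  have "(\<lambda>\<xi>. U t \<xi> $ k) = (\<lambda>\<xi>. if \<xi> = 0 then U t 0 $ k else FU a b \<theta> U0 U1 t \<xi> k)"
    using repr[OF sol ab _ t] by auto
  also have "\<dots> \<in> borel_measurable lborel" by measurable
  finally show "(\<lambda>\<xi>. U t \<xi> $ k) \<in> borel_measurable lborel" .
  have "(\<lambda>\<xi>. V t \<xi> $ k) = (\<lambda>\<xi>. if \<xi> = 0 then V t 0 $ k else FV a b \<theta> U0 U1 t \<xi> k)"
    using repr[OF sol ab _ t] by auto
  also have "\<dots> \<in> borel_measurable lborel" by measurable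
  finally show "(\<lambda>\<xi>. V t \<xi> $ k) \<in> borel_measurable lborel" .
qed


definition Kc :: "real \<Rightarrow> real \<Rightarrow> real" where
  "Kc a2 b2 = (2/a2+2)*48*(1+a2) + (2/b2+2)*27*(1+b2)"

lemma sq_sum_le: "(x + y)\<^sup>2 \<le> 2*x\<^sup>2 + 2*(y::real)\<^sup>2"
proof -
  have "0 \<le> (x - y)\<^sup>2" by simp
  then show ?thesis by (simp add: power2_sum power2_diff)
qed

lemma sq_mono: "0 \<le> x \<Longrightarrow> x \<le> y \<Longrightarrow> x\<^sup>2 \<le> (y::real)\<^sup>2"
  by (simp add: power_mono)

lemma arith_pw:
  fixes r rr a2 b2 e Ux Vx z w pp qq n0 n1 w0 z0 q0 p0 :: real
  assumes r: "r > 0" "rr = r\<^sup>2" and ab: "a2 > 0" "b2 \<ge> a2" and e: "0 \<le> e"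
    and nn: "0 \<le> Ux" "0 \<le> Vx" "0 \<le> z" "0 \<le> w" "0 \<le> pp" "0 \<le> qq" "0 \<le> n0" "0 \<le> n1"
    and hU: "rr*Ux \<le> z + r*pp" and hV: "rr*Vx \<le> w + r*qq"
    and EZ: "w\<^sup>2 + a2*rr*z\<^sup>2 \<le> 3*e*(w0\<^sup>2 + a2*rr*z0\<^sup>2)"
    and EP: "qq\<^sup>2 + b2*rr*pp\<^sup>2 \<le> 3*e*(q0\<^sup>2 + b2*rr*p0\<^sup>2)"
    and d0: "0 \<le> w0" "w0 \<le> 4*rr*n1" "0 \<le> z0" "z0 \<le> 4*rr*n0" "0 \<le> q0" "q0 \<le> 3*r*n1" "0 \<le> p0" "p0 \<le> 3*r*n0"
  shows "rr*Ux\<^sup>2 + Vx\<^sup>2 \<le> Kc a2 b2 * e * (n1\<^sup>2 + rr*n0\<^sup>2)"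
proof -
  have rr: "rr > 0" using r by simp
  have b2: "b2 > 0" using ab by simp
  define EZ where "EZ = 48*e*rr\<^sup>2*(n1\<^sup>2 + a2*rr*n0\<^sup>2)"
  define EP where "EP = 27*e*rr*(n1\<^sup>2 + b2*rr*n0\<^sup>2)"
  have "w0\<^sup>2 \<le> (4*rr*n1)\<^sup>2" by (rule sq_mono) (use d0 in auto)
  moreover have "z0\<^sup>2 \<le> (4*rr*n0)\<^sup>2" by (rule sq_mono) (use d0 in auto)
  ultimately have "w0\<^sup>2 + a2*rr*z0\<^sup>2 \<le> (4*rr*n1)\<^sup>2 + a2*rr*(4*rr*n0)\<^sup>2"
    using ab rr by (intro add_mono mult_left_mono) auto
  then have "3*e*(w0\<^sup>2 + a2*rr*z0\<^sup>2) \<le> 3*e*((4*rr*n1)\<^sup>2 + a2*rr*(4*rr*n0)\<^sup>2)"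
    using e by (intro mult_left_mono) auto
  also have "\<dots> = EZ" by (simp add: EZ_def power2_eq_square algebra_simps)
  finally have EZ': "w\<^sup>2 + a2*rr*z\<^sup>2 \<le> EZ" using EZ by linarith
  have "q0\<^sup>2 \<le> (3*r*n1)\<^sup>2" by (rule sq_mono) (use d0 in auto)
  moreover have "p0\<^sup>2 \<le> (3*r*n0)\<^sup>2" by (rule sq_mono) (use d0 in auto)
  ultimately have "q0\<^sup>2 + b2*rr*p0\<^sup>2 \<le> (3*r*n1)\<^sup>2 + b2*rr*(3*r*n0)\<^sup>2"
    using b2 rr by (intro add_mono mult_left_mono) auto
  then have "3*e*(q0\<^sup>2 + b2*rr*p0\<^sup>2) \<le> 3*e*((3*r*n1)\<^sup>2 + b2*rr*(3*r*n0)\<^sup>2)"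
    using e by (intro mult_left_mono) auto
  also have "\<dots> = EP" using r by (simp add: EP_def power2_eq_square algebra_simps)
  finally have EP': "qq\<^sup>2 + b2*rr*pp\<^sup>2 \<le> EP" using EP by linarith
  have z2: "a2*rr*z\<^sup>2 \<le> EZ" and w2: "w\<^sup>2 \<le> EZ" using EZ' ab rr by (auto intro: order_trans[OF _ EZ'])
  have p2: "b2*rr*pp\<^sup>2 \<le> EP" and q2: "qq\<^sup>2 \<le> EP" using EP' b2 rr by (auto intro: order_trans[OF _ EP'])
  have "(rr*Ux)\<^sup>2 \<le> (z + r*pp)\<^sup>2" by (rule sq_mono) (use nn rr hU in auto)
  also have "\<dots> \<le> 2*z\<^sup>2 + 2*(r*pp)\<^sup>2" by (rule sq_sum_le)
  finally have U1: "rr\<^sup>2*Ux\<^sup>2 \<le> 2*z\<^sup>2 + 2*rr*pp\<^sup>2" using r by (simp add: power_mult_distrib)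
  have "(rr*Vx)\<^sup>2 \<le> (w + r*qq)\<^sup>2" by (rule sq_mono) (use nn rr hV in auto)
  also have "\<dots> \<le> 2*w\<^sup>2 + 2*(r*qq)\<^sup>2" by (rule sq_sum_le)
  finally have V1: "rr\<^sup>2*Vx\<^sup>2 \<le> 2*w\<^sup>2 + 2*rr*qq\<^sup>2" using r by (simp add: power_mult_distrib)
  have "a2*rr*(rr\<^sup>2*(rr*Ux\<^sup>2 + Vx\<^sup>2)) = rr*(a2*rr*(rr\<^sup>2*Ux\<^sup>2)) + a2*rr*(rr\<^sup>2*Vx\<^sup>2)"
    by (simp add: algebra_simps power2_eq_square)
  also have "\<dots> \<le> rr*(a2*rr*(2*z\<^sup>2 + 2*rr*pp\<^sup>2)) + a2*rr*(2*w\<^sup>2 + 2*rr*qq\<^sup>2)"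
    using U1 V1 ab rr by (intro add_mono mult_left_mono) auto
  also have "\<dots> = 2*rr*(a2*rr*z\<^sup>2) + 2*a2*rr*rr/b2*(b2*rr*pp\<^sup>2) + 2*a2*rr*w\<^sup>2 + 2*a2*rr*rr*qq\<^sup>2"
    using b2 by (simp add: algebra_simps)
  also have "\<dots> \<le> 2*rr*EZ + 2*a2*rr*rr/b2*EP + 2*a2*rr*EZ + 2*a2*rr*rr*EP"
    using z2 p2 w2 q2 ab b2 rr by (intro add_mono mult_left_mono) auto
  also have "\<dots> = a2*rr*(rr\<^sup>2*((2/a2+2)*48*e*(n1\<^sup>2 + a2*rr*n0\<^sup>2) + (2/b2+2)*27*e*(n1\<^sup>2 + b2*rr*n0\<^sup>2)))"
    using ab b2 rr by (simp add: EZ_def EP_def field_simps power2_eq_square)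
  finally have "rr*Ux\<^sup>2 + Vx\<^sup>2 \<le> (2/a2+2)*48*e*(n1\<^sup>2 + a2*rr*n0\<^sup>2) + (2/b2+2)*27*e*(n1\<^sup>2 + b2*rr*n0\<^sup>2)"
    using ab rr by (simp add: mult_le_cancel_left_pos)
  also have "\<dots> \<le> (2/a2+2)*48*e*((1+a2)*(n1\<^sup>2 + rr*n0\<^sup>2)) + (2/b2+2)*27*e*((1+b2)*(n1\<^sup>2 + rr*n0\<^sup>2))"
  proof -
    have "n1\<^sup>2 + a2*rr*n0\<^sup>2 \<le> (1+a2)*(n1\<^sup>2 + rr*n0\<^sup>2)" using ab rr by (simp add: algebra_simps)
    moreover have "n1\<^sup>2 + b2*rr*n0\<^sup>2 \<le> (1+b2)*(n1\<^sup>2 + rr*n0\<^sup>2)" using b2 rr by (simp add: algebra_simps)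
    ultimately show ?thesis using ab b2 e by (intro add_mono mult_left_mono) auto
  qed
  also have "\<dots> = Kc a2 b2 * e * (n1\<^sup>2 + rr*n0\<^sup>2)" using ab b2 by (simp add: Kc_def field_simps)
  finally show ?thesis .
qed


lemma Pxi_bound: "cmod (Pxi \<xi> w) \<le> 3 * (norm \<xi> * norm w)"
proof -
  have "cmod (Pxi \<xi> w) \<le> (\<Sum>j\<in>UNIV. cmod (of_real (\<xi>$j) * w$j))" unfolding Pxi_def by (rule norm_sum)
  also have "\<dots> \<le> (\<Sum>j\<in>(UNIV::3 set). norm \<xi> * norm w)"
  proof (rule sum_mono)
    fix j :: 3
    have "\<bar>\<xi>$j\<bar> * cmod (w$j) \<le> norm \<xi> * norm w"
      by (intro mult_mono component_le_norm_cart) (auto simp: Finite_Cartesian_Product.norm_nth_le)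
    then show "cmod (of_real (\<xi>$j) * w$j) \<le> norm \<xi> * norm w" by (simp add: norm_mult)
  qed
  also have "\<dots> = 3 * (norm \<xi> * norm w)" by simp
  finally show ?thesis .
qed

lemma mode0_bound: "cmod (of_real ((norm \<xi>)\<^sup>2) * w $ k - of_real (\<xi>$k) * Pxi \<xi> w) \<le> 4 * (norm \<xi>)\<^sup>2 * norm w"
proof -
  have "cmod (of_real ((norm \<xi>)\<^sup>2) * w $ k - of_real (\<xi>$k) * Pxi \<xi> w)
     \<le> (norm \<xi>)\<^sup>2 * cmod (w $ k) + \<bar>\<xi>$k\<bar> * cmod (Pxi \<xi> w)"
    by (rule order_trans[OF norm_triangle_ineq4]) (simp add: norm_mult norm_power)
  also have "\<dots> \<le> (norm \<xi>)\<^sup>2 * norm w + norm \<xi> * (3 * (norm \<xi> * norm w))"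
    by (intro add_mono mult_mono Finite_Cartesian_Product.norm_nth_le component_le_norm_cart Pxi_bound) auto
  also have "\<dots> = 4 * (norm \<xi>)\<^sup>2 * norm w" by (simp add: power2_eq_square algebra_simps)
  finally show ?thesis .
qed

lemma pointwise:
  assumes sol: "is_solution a b \<theta> U0 U1 U V" and ab: "a\<^sup>2 > 0" "b\<^sup>2 > a\<^sup>2" and xi: "\<xi> \<noteq> 0" and t: "t \<ge> 0"
    and dl: "0 \<le> \<delta>" "\<delta>\<^sup>2 \<le> a\<^sup>2 * (norm \<xi>)\<^sup>2" "2*\<delta> \<le> sym_pow (2*\<theta>) \<xi>" "\<delta> * sym_pow (2*\<theta>) \<xi> \<le> a\<^sup>2 * (norm \<xi>)\<^sup>2"
  shows "(norm \<xi>)\<^sup>2 * (cmod (U t \<xi> $ k))\<^sup>2 + (cmod (V t \<xi> $ k))\<^sup>2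
     \<le> Kc (a\<^sup>2) (b\<^sup>2) * exp (- \<delta> * t / 3) * ((norm (U1 \<xi>))\<^sup>2 + (norm \<xi>)\<^sup>2 * (norm (U0 \<xi>))\<^sup>2)"
proof -
  note S = is_solutionD[OF sol, where \<xi>=\<xi>]
  note M = modes[where u="\<lambda>t. U t \<xi>" and v="\<lambda>t. V t \<xi>", OF S(3) S(4)]
  define rr where "rr = (norm \<xi>)\<^sup>2"
  have rr: "rr > 0" using xi by (simp add: rr_def)
  have dd: "0 \<le> sym_pow (2*\<theta>) \<xi>" by (rule sym_pow_nonneg)
  have ab2: "a\<^sup>2 * (norm \<xi>)\<^sup>2 \<le> b\<^sup>2 * (norm \<xi>)\<^sup>2" using ab by (intro mult_right_mono) auto
  define Z where "Z t = of_real ((norm \<xi>)\<^sup>2) * U t \<xi> $ k - of_real (\<xi>$k) * Pxi \<xi> (U t \<xi>)" for t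
  define W where "W t = of_real ((norm \<xi>)\<^sup>2) * V t \<xi> $ k - of_real (\<xi>$k) * Pxi \<xi> (V t \<xi>)" for t
  define p where "p t = Pxi \<xi> (U t \<xi>)" for t
  define q where "q t = Pxi \<xi> (V t \<xi>)" for t
  have DZ: "(cmod (W t))\<^sup>2 + (a\<^sup>2*(norm \<xi>)\<^sup>2)*(cmod (Z t))\<^sup>2 \<le> 3*exp(-\<delta>*t/3)*((cmod (W 0))\<^sup>2 + (a\<^sup>2*(norm \<xi>)\<^sup>2)*(cmod (Z 0))\<^sup>2)"
    unfolding Z_def W_def by (rule scalar_decay[OF M(3) M(4)]) (use dl dd ab rr t in \<open>auto simp: rr_def\<close>)
  have DP: "(cmod (q t))\<^sup>2 + (b\<^sup>2*(norm \<xi>)\<^sup>2)*(cmod (p t))\<^sup>2 \<le> 3*exp(-\<delta>*t/3)*((cmod (q 0))\<^sup>2 + (b\<^sup>2*(norm \<xi>)\<^sup>2)*(cmod (p 0))\<^sup>2)"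
    unfolding p_def q_def by (rule scalar_decay[OF M(1) M(2)]) (use dl dd ab ab2 rr t in \<open>auto simp: rr_def intro: order_trans[OF _ ab2]\<close>)
  have hU: "rr * cmod (U t \<xi> $ k) \<le> cmod (Z t) + norm \<xi> * cmod (p t)"
  proof -
    have "of_real rr * U t \<xi> $ k = Z t + of_real (\<xi>$k) * p t" by (simp add: Z_def p_def rr_def)
    then have "rr * cmod (U t \<xi> $ k) = cmod (Z t + of_real (\<xi>$k) * p t)"
      by (metis norm_mult norm_of_real abs_of_pos rr)
    also have "\<dots> \<le> cmod (Z t) + \<bar>\<xi>$k\<bar> * cmod (p t)" by (rule order_trans[OF norm_triangle_ineq]) (simp add: norm_mult)
    also have "\<dots> \<le> cmod (Z t) + norm \<xi> * cmod (p t)" by (intro add_left_mono mult_right_mono component_le_norm_cart) auto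
    finally show ?thesis .
  qed
  have hV: "rr * cmod (V t \<xi> $ k) \<le> cmod (W t) + norm \<xi> * cmod (q t)"
  proof -
    have "of_real rr * V t \<xi> $ k = W t + of_real (\<xi>$k) * q t" by (simp add: W_def q_def rr_def)
    then have "rr * cmod (V t \<xi> $ k) = cmod (W t + of_real (\<xi>$k) * q t)"
      by (metis norm_mult norm_of_real abs_of_pos rr)
    also have "\<dots> \<le> cmod (W t) + \<bar>\<xi>$k\<bar> * cmod (q t)" by (rule order_trans[OF norm_triangle_ineq]) (simp add: norm_mult)
    also have "\<dots> \<le> cmod (W t) + norm \<xi> * cmod (q t)" by (intro add_left_mono mult_right_mono component_le_norm_cart) auto
    finally show ?thesis .
  qed
  have w0: "cmod (W 0) \<le> 4*rr*norm (U1 \<xi>)" unfolding W_def S(2) rr_def by (rule mode0_bound)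
  have z0: "cmod (Z 0) \<le> 4*rr*norm (U0 \<xi>)" unfolding Z_def S(1) rr_def by (rule mode0_bound)
  have q0: "cmod (q 0) \<le> 3*norm \<xi>*norm (U1 \<xi>)" unfolding q_def S(2) using Pxi_bound by (simp add: mult.assoc)
  have p0: "cmod (p 0) \<le> 3*norm \<xi>*norm (U0 \<xi>)" unfolding p_def S(1) using Pxi_bound by (simp add: mult.assoc)
  show ?thesis
    using arith_pw[of "norm \<xi>" rr "a\<^sup>2" "b\<^sup>2" "exp (- \<delta> * t / 3)" "cmod (U t \<xi> $ k)" "cmod (V t \<xi> $ k)"
        "cmod (Z t)" "cmod (W t)" "cmod (p t)" "cmod (q t)" "norm (U0 \<xi>)" "norm (U1 \<xi>)" "cmod (W 0)" "cmod (Z 0)" "cmod (q 0)" "cmod (p 0)"]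
      xi rr_def ab hU hV DZ DP w0 z0 q0 p0 by (simp add: rr_def)
qed


lemma ypow:
  fixes y p c :: real
  assumes "0 \<le> y" "0 < p" "0 < c"
  shows "y powr p * exp (- c * y) \<le> (p/c) powr p"
proof -
  have "c*y/p \<le> exp (c*y/p)" using exp_ge_add_one_self[of "c*y/p"] by linarith
  then have "(c*y/p) powr p \<le> exp (c*y/p) powr p"
    using assms by (intro powr_mono2) auto
  also have "\<dots> = exp (c*y)" using assms by (simp add: exp_powr_real)
  finally have A: "(c*y/p) powr p \<le> exp (c*y)" .
  have "y powr p = (p/c) powr p * (c*y/p) powr p"
    using assms by (simp add: powr_mult[symmetric])
  then have "y powr p * exp (- c * y) = (p/c) powr p * ((c*y/p) powr p * exp (- (c * y)))" by simp
  also have "(c*y/p) powr p * exp (- (c * y)) \<le> exp (c*y) * exp (- (c * y))"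
    using A by (intro mult_right_mono) auto
  also have "exp (c*y) * exp (- (c * y)) = 1" by (simp add: exp_minus field_simps)
  finally show ?thesis using assms by (simp add: mult_left_mono)
qed

definition m2 :: "real \<Rightarrow> real" where "m2 \<theta> = 2 * max (1 - \<theta>) \<theta>"
definition c0 :: "real \<Rightarrow> real" where "c0 a = min (1/2) (min \<bar>a\<bar> (a\<^sup>2))"
definition delta :: "real \<Rightarrow> real \<Rightarrow> real^3 \<Rightarrow> real" where
  "delta a \<theta> \<xi> = c0 a * min ((norm \<xi>) powr (m2 \<theta>)) 1"

lemma c0_pos: "a\<^sup>2 > 0 \<Longrightarrow> c0 a > 0" by (simp add: c0_def)

lemma m2_bounds: "0 \<le> \<theta> \<Longrightarrow> \<theta> \<le> 1 \<Longrightarrow> 1 \<le> m2 \<theta> \<and> m2 \<theta> \<le> 2 \<and> 2*\<theta> \<le> m2 \<theta> \<and> 2 \<le> m2 \<theta> + 2*\<theta>"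
  by (simp add: m2_def max_def)

lemma sym_pow_pos: "\<xi> \<noteq> 0 \<Longrightarrow> sym_pow r \<xi> = norm \<xi> powr r"
  by (simp add: sym_pow_def)

lemma delta_conds:
  assumes a: "a\<^sup>2 > 0" and th: "0 \<le> \<theta>" "\<theta> \<le> 1" and xi: "\<xi> \<noteq> 0"
  shows "0 \<le> delta a \<theta> \<xi>" "(delta a \<theta> \<xi>)\<^sup>2 \<le> a\<^sup>2 * (norm \<xi>)\<^sup>2"
    "2 * delta a \<theta> \<xi> \<le> sym_pow (2*\<theta>) \<xi>" "delta a \<theta> \<xi> * sym_pow (2*\<theta>) \<xi> \<le> a\<^sup>2 * (norm \<xi>)\<^sup>2"
proof -
  define r where "r = norm \<xi>"
  have r: "r > 0" using xi by (simp add: r_def)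
  note mb = m2_bounds[OF th]
  have c: "0 < c0 a" "c0 a \<le> 1/2" "c0 a \<le> \<bar>a\<bar>" "c0 a \<le> a\<^sup>2" using a by (auto simp: c0_def)
  have c2: "(c0 a)\<^sup>2 \<le> a\<^sup>2" using c by (metis abs_le_square_iff abs_of_pos)
  have sp: "sym_pow (2*\<theta>) \<xi> = r powr (2*\<theta>)" using xi by (simp add: sym_pow_pos r_def)
  have r2: "r\<^sup>2 = r powr 2" using r by (simp add: powr_numeral)
  show "0 \<le> delta a \<theta> \<xi>" using c by (simp add: delta_def)
  have "(delta a \<theta> \<xi>)\<^sup>2 \<le> a\<^sup>2 * r\<^sup>2 \<and> 2 * delta a \<theta> \<xi> \<le> r powr (2*\<theta>) \<and> delta a \<theta> \<xi> * r powr (2*\<theta>) \<le> a\<^sup>2 * r\<^sup>2"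
  proof (cases "r \<le> 1")
    case True
    have le1: "r powr m2 \<theta> \<le> 1" using True r mb by (intro powr_le1) auto
    then have d: "delta a \<theta> \<xi> = c0 a * r powr m2 \<theta>" by (simp add: delta_def r_def)
    have "r powr m2 \<theta> \<le> r powr 1" using True r mb by (intro powr_mono') auto
    then have rm: "r powr m2 \<theta> \<le> r" using r by simp
    have "(c0 a * r powr m2 \<theta>)\<^sup>2 \<le> (c0 a * r)\<^sup>2" using rm c r by (intro power_mono mult_left_mono) auto
    also have "\<dots> = (c0 a)\<^sup>2 * r\<^sup>2" by (simp add: power_mult_distrib)
    also have "\<dots> \<le> a\<^sup>2 * r\<^sup>2" using c2 by (intro mult_right_mono) auto
    finally have 1: "(delta a \<theta> \<xi>)\<^sup>2 \<le> a\<^sup>2 * r\<^sup>2" using d by simp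
    have "2 * (c0 a * r powr m2 \<theta>) = (2 * c0 a) * r powr m2 \<theta>" by simp
    also have "\<dots> \<le> 1 * r powr m2 \<theta>" using c by (intro mult_right_mono) auto
    finally have "2 * (c0 a * r powr m2 \<theta>) \<le> r powr m2 \<theta>" by simp
    also have "\<dots> \<le> r powr (2*\<theta>)" using True r mb by (intro powr_mono') auto
    finally have 2: "2 * delta a \<theta> \<xi> \<le> r powr (2*\<theta>)" using d by simp
    have "c0 a * r powr m2 \<theta> * r powr (2*\<theta>) = c0 a * r powr (m2 \<theta> + 2*\<theta>)" by (simp add: powr_add)
    also have "\<dots> \<le> c0 a * r powr 2" using True r mb c by (intro mult_left_mono powr_mono') auto
    also have "\<dots> \<le> a\<^sup>2 * r powr 2" using c by (intro mult_right_mono) auto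
    finally have 3: "delta a \<theta> \<xi> * r powr (2*\<theta>) \<le> a\<^sup>2 * r\<^sup>2" using d r2 by simp
    show ?thesis using 1 2 3 by simp
  next
    case False
    have ge1: "1 \<le> r powr m2 \<theta>" using False mb by (intro ge_one_powr_ge_zero) auto
    then have d: "delta a \<theta> \<xi> = c0 a" by (simp add: delta_def r_def)
    have "(c0 a)\<^sup>2 \<le> a\<^sup>2 * 1" using c2 by simp
    also have "\<dots> \<le> a\<^sup>2 * r\<^sup>2" using False by (intro mult_left_mono) (auto simp: one_le_power)
    finally have 1: "(delta a \<theta> \<xi>)\<^sup>2 \<le> a\<^sup>2 * r\<^sup>2" using d by simp
    have "1 \<le> r powr (2*\<theta>)" using False th by (intro ge_one_powr_ge_zero) auto
    then have 2: "2 * delta a \<theta> \<xi> \<le> r powr (2*\<theta>)" using d c by simp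
    have "c0 a * r powr (2*\<theta>) \<le> a\<^sup>2 * r powr (2*\<theta>)" using c by (intro mult_right_mono) auto
    also have "\<dots> \<le> a\<^sup>2 * r powr 2" using False th by (intro mult_left_mono powr_mono) auto
    finally have 3: "delta a \<theta> \<xi> * r powr (2*\<theta>) \<le> a\<^sup>2 * r\<^sup>2" using d r2 by simp
    show ?thesis using 1 2 3 by simp
  qed
  then show "(delta a \<theta> \<xi>)\<^sup>2 \<le> a\<^sup>2 * (norm \<xi>)\<^sup>2"
    "2 * delta a \<theta> \<xi> \<le> sym_pow (2*\<theta>) \<xi>" "delta a \<theta> \<xi> * sym_pow (2*\<theta>) \<xi> \<le> a\<^sup>2 * (norm \<xi>)\<^sup>2"
    using sp by (auto simp: r_def)
qed


definition Kw :: "real \<Rightarrow> real \<Rightarrow> real \<Rightarrow> real" where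
  "Kw a \<theta> s = max 1 (exp (c0 a / 3) * ((s / max (1-\<theta>) \<theta>) / (c0 a / 3)) powr (s / max (1-\<theta>) \<theta>))"

lemma weight:
  assumes a: "a\<^sup>2 > 0" and th: "0 \<le> \<theta>" "\<theta> \<le> 1" and s: "0 \<le> s" and t: "0 \<le> t" and xi: "\<xi> \<noteq> 0"
  shows "(sym_pow s \<xi>)\<^sup>2 * exp (- delta a \<theta> \<xi> * t / 3)
    \<le> Kw a \<theta> s * (1+t) powr (- s / max (1-\<theta>) \<theta>) * (1 + (norm \<xi>)\<^sup>2) powr s"
proof (cases "s = 0")
  case True
  have "exp (- delta a \<theta> \<xi> * t / 3) \<le> 1"
    using delta_conds(1)[OF a th xi] t by simp
  moreover have "1 \<le> Kw a \<theta> s" by (simp add: Kw_def)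
  ultimately have E: "exp (- delta a \<theta> \<xi> * t / 3) \<le> Kw a \<theta> s" by linarith
  have "(1+t) powr (- s / max (1-\<theta>) \<theta>) = 1" "(1 + (norm \<xi>)\<^sup>2) powr s = 1"
    using True t by (simp_all add: add_nonneg_eq_0_iff)
  then show ?thesis using True E by (simp add: sym_pow_def)
next
  case False
  then have s0: "s > 0" using s by simp
  define r where "r = norm \<xi>"
  have r: "r > 0" using xi by (simp add: r_def)
  define m where "m = max (1-\<theta>) \<theta>"
  have m: "m > 0" "m2 \<theta> = 2*m" by (auto simp: m_def m2_def max_def)
  define p where "p = s / m"
  have p: "p > 0" "m2 \<theta> * p = 2 * s" using s0 m by (auto simp: p_def)
  define c where "c = c0 a / 3"
  have c: "c > 0" using c0_pos[OF a] by (simp add: c_def)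
  define mn where "mn = min (r powr m2 \<theta>) 1"
  have mn: "0 \<le> mn" "mn \<le> 1" by (auto simp: mn_def)
  define y where "y = mn * (1+t)"
  have y: "0 \<le> y" using mn t by (simp add: y_def)
  have del: "delta a \<theta> \<xi> * t / 3 = c * mn * t" by (simp add: delta_def c_def mn_def r_def)
  have sp: "(sym_pow s \<xi>)\<^sup>2 = r powr (2 * s)"
    using False r by (simp add: sym_pow_def r_def power2_eq_square powr_add[symmetric])
  have e1: "exp (- (c * mn * t)) = exp (c * mn) * exp (- c * y)"
    by (simp add: y_def exp_add[symmetric] algebra_simps)
  have e2: "exp (c * mn) \<le> exp c" using mn c by (simp add: mult_left_le_one_le)
  have tp: "(1+t) powr p * (1+t) powr (-p) = 1" using t by (simp add: powr_add[symmetric])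
  have key: "r powr (2 * s) * exp (- c * y) \<le> (p/c) powr p * (1+t) powr (-p) * (1 + r\<^sup>2) powr s"
  proof (cases "r \<le> 1")
    case True
    then have mn1: "mn = r powr m2 \<theta>" using r m by (simp add: mn_def powr_le1)
    have "r powr (2 * s) = mn powr p" using r by (simp add: mn1 powr_powr p)
    then have "r powr (2 * s) = y powr p * (1+t) powr (-p)"
      using t mn tp by (simp add: y_def powr_mult)
    then have "r powr (2 * s) * exp (- c * y) = (y powr p * exp (- c * y)) * (1+t) powr (-p)" by simp
    also have "\<dots> \<le> (p/c) powr p * (1+t) powr (-p)"
      using ypow[OF y p(1) c] by (intro mult_right_mono) auto
    also have "\<dots> \<le> (p/c) powr p * (1+t) powr (-p) * (1 + r\<^sup>2) powr s"
    proof -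
      have "1 \<le> (1 + r\<^sup>2) powr s" using s by (intro ge_one_powr_ge_zero) auto
      moreover have "0 \<le> (p/c) powr p * (1+t) powr (-p)" by simp
      ultimately show ?thesis using mult_left_mono[of 1 "(1 + r\<^sup>2) powr s" "(p/c) powr p * (1+t) powr (-p)"] by simp
    qed
    finally show ?thesis .
  next
    case False
    then have "1 \<le> r powr m2 \<theta>" using m by (intro ge_one_powr_ge_zero) auto
    then have mn1: "mn = 1" by (simp add: mn_def)
    have "r powr (2 * s) = (r\<^sup>2) powr s" using r by (simp add: powr_powr[symmetric] powr_numeral)
    also have "\<dots> \<le> (1 + r\<^sup>2) powr s" using s by (intro powr_mono2) auto
    finally have rs: "r powr (2 * s) \<le> (1 + r\<^sup>2) powr s" .
    have "exp (- c * y) = (y powr p * exp (- c * y)) * (1+t) powr (-p)"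
      using tp by (simp add: y_def mn1)
    also have "\<dots> \<le> (p/c) powr p * (1+t) powr (-p)"
      using ypow[OF y p(1) c] by (intro mult_right_mono) auto
    finally have "exp (- c * y) \<le> (p/c) powr p * (1+t) powr (-p)" .
    then have "r powr (2 * s) * exp (- c * y) \<le> (1 + r\<^sup>2) powr s * ((p/c) powr p * (1+t) powr (-p))"
      using rs by (intro mult_mono) auto
    then show ?thesis by (simp add: algebra_simps)
  qed
  have "(sym_pow s \<xi>)\<^sup>2 * exp (- delta a \<theta> \<xi> * t / 3) = exp (c * mn) * (r powr (2 * s) * exp (- c * y))"
  proof -
    have h: "- delta a \<theta> \<xi> * t / 3 = - (c * mn * t)" using del by simp
    have ex: "exp (- delta a \<theta> \<xi> * t / 3) = exp (c * mn) * exp (- c * y)" unfolding h by (rule e1)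
    show ?thesis unfolding sp ex by (simp add: mult_ac)
  qed
  also have "\<dots> \<le> exp c * ((p/c) powr p * (1+t) powr (-p) * (1 + r\<^sup>2) powr s)"
    by (rule mult_mono[OF e2 key]) auto
  also have "\<dots> \<le> Kw a \<theta> s * (1+t) powr (-p) * (1 + r\<^sup>2) powr s"
  proof -
    have "exp c * (p/c) powr p \<le> Kw a \<theta> s" by (simp add: Kw_def c_def p_def m_def)
    then show ?thesis by (simp add: mult.assoc[symmetric] mult_right_mono)
  qed
  finally show ?thesis by (simp add: p_def m_def r_def)
qed


lemma normsq_vec: "(norm (w::complex^3))\<^sup>2 = (\<Sum>j\<in>UNIV. (cmod (w$j))\<^sup>2)"
  by (simp add: norm_vec_def L2_set_def sum_nonneg)

lemma sum_sq_le:
  assumes "finite A" "\<And>i. i \<in> A \<Longrightarrow> 0 \<le> f i"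
  shows "(\<Sum>i\<in>A. (f i)\<^sup>2) \<le> (\<Sum>i\<in>A. f i :: real)\<^sup>2"
  using assms
proof (induction A rule: finite_induct)
  case empty then show ?case by simp
next
  case (insert x F)
  have F: "0 \<le> sum f F" using insert by (intro sum_nonneg) auto
  have "(\<Sum>i\<in>insert x F. (f i)\<^sup>2) = (f x)\<^sup>2 + (\<Sum>i\<in>F. (f i)\<^sup>2)" using insert by simp
  also have "\<dots> \<le> (f x)\<^sup>2 + (sum f F)\<^sup>2" using insert by simp
  also have "\<dots> \<le> (f x + sum f F)\<^sup>2" using F insert by (simp add: power2_sum)
  also have "\<dots> = (\<Sum>i\<in>insert x F. f i)\<^sup>2" using insert by simp
  finally show ?case .
qed

lemma Hs_sq: "(Hs_norm s f)\<^sup>2 = (LINT \<xi>|lborel. (1 + (norm \<xi>)\<^sup>2) powr s * (cmod (f \<xi>))\<^sup>2)"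
  unfolding Hs_norm_def by (rule real_sqrt_pow2) (intro integral_nonneg_AE, simp)

lemma D_sq: "(D_norm s f)\<^sup>2 = (LINT \<xi>|lborel. (sym_pow s \<xi>)\<^sup>2 * (cmod (f \<xi>))\<^sup>2)"
  unfolding D_norm_def by (rule real_sqrt_pow2) (intro integral_nonneg_AE, simp)

lemma AE_nz: "AE \<xi> in lborel. (\<xi>::real^3) \<noteq> 0"
  by (rule AE_I'[of "{0}"]) (auto intro: countable_imp_null_set_lborel)

lemma int_lower:
  assumes "integrable lborel (\<lambda>\<xi>. (1 + (norm \<xi>)\<^sup>2) powr \<sigma> * (cmod (f \<xi>))\<^sup>2)"
    and [measurable]: "f \<in> borel_measurable lborel" and "\<sigma>' \<le> \<sigma>"
  shows "integrable lborel (\<lambda>\<xi>::real^3. (1 + (norm \<xi>)\<^sup>2) powr \<sigma>' * (cmod (f \<xi>))\<^sup>2)"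
proof (rule Bochner_Integration.integrable_bound[OF assms(1)])
  show "(\<lambda>\<xi>::real^3. (1 + (norm \<xi>)\<^sup>2) powr \<sigma>' * (cmod (f \<xi>))\<^sup>2) \<in> borel_measurable lborel" by measurable
  show "AE \<xi> in lborel. norm ((1 + (norm \<xi>)\<^sup>2) powr \<sigma>' * (cmod (f \<xi>))\<^sup>2) \<le> norm ((1 + (norm \<xi>)\<^sup>2) powr \<sigma> * (cmod (f \<xi>))\<^sup>2)"
  proof (rule AE_I2)
    fix \<xi> :: "real^3"
    have "(1 + (norm \<xi>)\<^sup>2) powr \<sigma>' \<le> (1 + (norm \<xi>)\<^sup>2) powr \<sigma>" using assms(3) by (intro powr_mono) auto
    then show "norm ((1 + (norm \<xi>)\<^sup>2) powr \<sigma>' * (cmod (f \<xi>))\<^sup>2) \<le> norm ((1 + (norm \<xi>)\<^sup>2) powr \<sigma> * (cmod (f \<xi>))\<^sup>2)"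
      by (simp add: mult_right_mono)
  qed
qed

lemma Bsum: "(\<Sum>j\<in>UNIV. (1 + rr) powr (\<sigma>+1) * (cmod (w0$j))\<^sup>2 + (1 + rr) powr \<sigma> * (cmod (w1$j))\<^sup>2)
   = (1 + rr) powr \<sigma> * ((1 + rr) * (norm (w0::complex^3))\<^sup>2 + (norm (w1::complex^3))\<^sup>2)" if "0 \<le> (rr::real)"
proof -
  have "(1 + rr) powr (\<sigma>+1) = (1 + rr) powr \<sigma> * (1 + rr)" using that by (simp add: powr_add)
  then show ?thesis
    by (simp add: normsq_vec sum.distrib sum_distrib_left algebra_simps)
qed

lemma data_int:
  fixes U0 U1 :: "real^3 \<Rightarrow> complex^3"
  assumes i0: "\<And>j. integrable lborel (\<lambda>\<xi>. (1 + (norm \<xi>)\<^sup>2) powr (\<sigma>+1) * (cmod (U0 \<xi> $ j))\<^sup>2)"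
    and i1: "\<And>j. integrable lborel (\<lambda>\<xi>. (1 + (norm \<xi>)\<^sup>2) powr \<sigma> * (cmod (U1 \<xi> $ j))\<^sup>2)"
  shows "integrable lborel (\<lambda>\<xi>. (1 + (norm \<xi>)\<^sup>2) powr \<sigma> * ((1 + (norm \<xi>)\<^sup>2) * (norm (U0 \<xi>))\<^sup>2 + (norm (U1 \<xi>))\<^sup>2))"
    and "(LINT \<xi>|lborel. (1 + (norm \<xi>)\<^sup>2) powr \<sigma> * ((1 + (norm \<xi>)\<^sup>2) * (norm (U0 \<xi>))\<^sup>2 + (norm (U1 \<xi>))\<^sup>2))
       \<le> (\<Sum>j\<in>UNIV. Hs_norm (\<sigma>+1) (\<lambda>\<xi>. U0 \<xi> $ j) + Hs_norm \<sigma> (\<lambda>\<xi>. U1 \<xi> $ j))\<^sup>2"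
proof -
  let ?B = "\<lambda>\<xi>. \<Sum>j\<in>UNIV. (1 + (norm \<xi>)\<^sup>2) powr (\<sigma>+1) * (cmod (U0 \<xi> $ j))\<^sup>2 + (1 + (norm \<xi>)\<^sup>2) powr \<sigma> * (cmod (U1 \<xi> $ j))\<^sup>2"
  have eq: "(\<lambda>\<xi>. (1 + (norm \<xi>)\<^sup>2) powr \<sigma> * ((1 + (norm \<xi>)\<^sup>2) * (norm (U0 \<xi>))\<^sup>2 + (norm (U1 \<xi>))\<^sup>2)) = ?B"
    by (rule ext, rule Bsum[symmetric]) simp
  have iB: "integrable lborel ?B" by (rule Bochner_Integration.integrable_sum[OF Bochner_Integration.integrable_add[OF i0 i1]])
  then show "integrable lborel (\<lambda>\<xi>. (1 + (norm \<xi>)\<^sup>2) powr \<sigma> * ((1 + (norm \<xi>)\<^sup>2) * (norm (U0 \<xi>))\<^sup>2 + (norm (U1 \<xi>))\<^sup>2))"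
    unfolding eq .
  have "(LINT \<xi>|lborel. ?B \<xi>) = (\<Sum>j\<in>UNIV. (Hs_norm (\<sigma>+1) (\<lambda>\<xi>. U0 \<xi> $ j))\<^sup>2 + (Hs_norm \<sigma> (\<lambda>\<xi>. U1 \<xi> $ j))\<^sup>2)"
    using i0 i1 by (simp add: Bochner_Integration.integral_sum Bochner_Integration.integral_add Hs_sq)
  also have "\<dots> \<le> (\<Sum>j\<in>UNIV. (Hs_norm (\<sigma>+1) (\<lambda>\<xi>. U0 \<xi> $ j) + Hs_norm \<sigma> (\<lambda>\<xi>. U1 \<xi> $ j))\<^sup>2)"
  proof (rule sum_mono)
    fix j :: 3
    have "0 \<le> Hs_norm (\<sigma>+1) (\<lambda>\<xi>. U0 \<xi> $ j)" "0 \<le> Hs_norm \<sigma> (\<lambda>\<xi>. U1 \<xi> $ j)" by (simp_all add: Hs_norm_def)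
    then show "(Hs_norm (\<sigma>+1) (\<lambda>\<xi>. U0 \<xi> $ j))\<^sup>2 + (Hs_norm \<sigma> (\<lambda>\<xi>. U1 \<xi> $ j))\<^sup>2
        \<le> (Hs_norm (\<sigma>+1) (\<lambda>\<xi>. U0 \<xi> $ j) + Hs_norm \<sigma> (\<lambda>\<xi>. U1 \<xi> $ j))\<^sup>2"
      by (simp add: power2_sum)
  qed
  also have "\<dots> \<le> (\<Sum>j\<in>UNIV. Hs_norm (\<sigma>+1) (\<lambda>\<xi>. U0 \<xi> $ j) + Hs_norm \<sigma> (\<lambda>\<xi>. U1 \<xi> $ j))\<^sup>2"
    by (rule sum_sq_le) (auto simp: Hs_norm_def)
  finally show "(LINT \<xi>|lborel. (1 + (norm \<xi>)\<^sup>2) powr \<sigma> * ((1 + (norm \<xi>)\<^sup>2) * (norm (U0 \<xi>))\<^sup>2 + (norm (U1 \<xi>))\<^sup>2))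
       \<le> (\<Sum>j\<in>UNIV. Hs_norm (\<sigma>+1) (\<lambda>\<xi>. U0 \<xi> $ j) + Hs_norm \<sigma> (\<lambda>\<xi>. U1 \<xi> $ j))\<^sup>2"
    unfolding eq .
qed


lemma Kc_nonneg: "a2 > 0 \<Longrightarrow> b2 > 0 \<Longrightarrow> 0 \<le> Kc a2 b2"
  by (simp add: Kc_def)

lemma L2_pointwise:
  assumes sol: "is_solution a b \<theta> U0 U1 U V" and ab: "a\<^sup>2 > 0" "b\<^sup>2 > a\<^sup>2" and xi: "\<xi> \<noteq> 0" and t: "t \<ge> 0"
  shows "(cmod (U t \<xi> $ k))\<^sup>2 \<le> (2 + 2 * Kc (a\<^sup>2) (b\<^sup>2)) * (1+t)\<^sup>2 *
           ((1 + (norm \<xi>)\<^sup>2) * (norm (U0 \<xi>))\<^sup>2 + (norm (U1 \<xi>))\<^sup>2)"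
proof -
  note S = is_solutionD[OF sol, where \<xi>=\<xi>]
  define K where "K = Kc (a\<^sup>2) (b\<^sup>2)"
  have K: "0 \<le> K" unfolding K_def by (rule Kc_nonneg) (use ab in auto)
  define n0 where "n0 = norm (U0 \<xi>)"
  define n1 where "n1 = norm (U1 \<xi>)"
  define rr where "rr = (norm \<xi>)\<^sup>2"
  have rr: "0 \<le> rr" by (simp add: rr_def)
  define M where "M = sqrt (K * (n1\<^sup>2 + rr * n0\<^sup>2))"
  have M0: "0 \<le> M" using K rr by (simp add: M_def)
  have Vb: "cmod (V \<tau> \<xi> $ k) \<le> M" if "\<tau> \<ge> 0" for \<tau>
  proof -
    have "(norm \<xi>)\<^sup>2 * (cmod (U \<tau> \<xi> $ k))\<^sup>2 + (cmod (V \<tau> \<xi> $ k))\<^sup>2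
      \<le> Kc (a\<^sup>2) (b\<^sup>2) * exp (- 0 * \<tau> / 3) * ((norm (U1 \<xi>))\<^sup>2 + (norm \<xi>)\<^sup>2 * (norm (U0 \<xi>))\<^sup>2)"
      by (rule pointwise[OF sol ab xi that]) (use ab in \<open>auto simp: sym_pow_nonneg\<close>)
    then have H2: "(norm \<xi>)\<^sup>2 * (cmod (U \<tau> \<xi> $ k))\<^sup>2 + (cmod (V \<tau> \<xi> $ k))\<^sup>2
      \<le> Kc (a\<^sup>2) (b\<^sup>2) * ((norm (U1 \<xi>))\<^sup>2 + (norm \<xi>)\<^sup>2 * (norm (U0 \<xi>))\<^sup>2)" by simp
    have "0 \<le> (norm \<xi>)\<^sup>2 * (cmod (U \<tau> \<xi> $ k))\<^sup>2" by simp
    then have "(cmod (V \<tau> \<xi> $ k))\<^sup>2 \<le> Kc (a\<^sup>2) (b\<^sup>2) * ((norm (U1 \<xi>))\<^sup>2 + (norm \<xi>)\<^sup>2 * (norm (U0 \<xi>))\<^sup>2)"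
      using H2 by linarith
    then have "(cmod (V \<tau> \<xi> $ k))\<^sup>2 \<le> K * (n1\<^sup>2 + rr * n0\<^sup>2)"
      unfolding K_def n0_def n1_def rr_def .
    then show ?thesis unfolding M_def by (rule real_le_rsqrt)
  qed
  have "norm ((\<lambda>\<tau>. U \<tau> \<xi> $ k) t - (\<lambda>\<tau>. U \<tau> \<xi> $ k) 0) \<le> M * norm (t - 0)"
  proof (rule differentiable_bound[where S="{0..t}" and f'="\<lambda>x h. h *\<^sub>R V x \<xi> $ k"])
    show "convex {0..t}" by (rule convex_real_interval)
    fix x assume x: "x \<in> {0..t}"
    have "((\<lambda>\<tau>. U \<tau> \<xi> $ k) has_vector_derivative V x \<xi> $ k) (at x within {0..})"
      using x by (intro comp_vd S(3)) auto
    then have "((\<lambda>\<tau>. U \<tau> \<xi> $ k) has_vector_derivative V x \<xi> $ k) (at x within {0..t})"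
      by (rule has_vector_derivative_within_subset) auto
    then show "((\<lambda>\<tau>. U \<tau> \<xi> $ k) has_derivative (\<lambda>h. h *\<^sub>R V x \<xi> $ k)) (at x within {0..t})"
      by (simp add: has_vector_derivative_def)
    have "onorm (\<lambda>h::real. h *\<^sub>R V x \<xi> $ k) = onorm (\<lambda>h::real. h) * norm (V x \<xi> $ k)"
      by (rule onorm_scaleR_left) (rule bounded_linear_ident)
    also have "\<dots> = cmod (V x \<xi> $ k)" by (simp add: onorm_id)
    also have "\<dots> \<le> M" using x Vb by auto
    finally show "onorm (\<lambda>h. h *\<^sub>R V x \<xi> $ k) \<le> M" .
  qed (use t in auto)
  then have "cmod (U t \<xi> $ k - U0 \<xi> $ k) \<le> M * t" using t S(1) by simp
  then have "cmod (U t \<xi> $ k) \<le> n0 + M * t"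
    using norm_triangle_ineq2[of "U t \<xi> $ k" "U0 \<xi> $ k"] Finite_Cartesian_Product.norm_nth_le[of "U0 \<xi>" k]
    by (simp add: n0_def)
  then have "(cmod (U t \<xi> $ k))\<^sup>2 \<le> (n0 + M * t)\<^sup>2" by (intro power_mono) auto
  also have "\<dots> \<le> 2 * n0\<^sup>2 + 2 * (M * t)\<^sup>2" by (rule sq_sum_le)
  also have "(M * t)\<^sup>2 = K * (n1\<^sup>2 + rr * n0\<^sup>2) * t\<^sup>2" using K rr by (simp add: M_def power_mult_distrib)
  also have "2 * n0\<^sup>2 + 2 * (K * (n1\<^sup>2 + rr * n0\<^sup>2) * t\<^sup>2)
      \<le> 2 * ((1+t)\<^sup>2 * ((1 + rr) * n0\<^sup>2 + n1\<^sup>2)) + 2 * K * ((1+t)\<^sup>2 * ((1 + rr) * n0\<^sup>2 + n1\<^sup>2))"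
  proof -
    have X1: "n0\<^sup>2 \<le> (1 + rr) * n0\<^sup>2 + n1\<^sup>2" using rr by (simp add: algebra_simps)
    have X2: "n1\<^sup>2 + rr * n0\<^sup>2 \<le> (1 + rr) * n0\<^sup>2 + n1\<^sup>2" by (simp add: algebra_simps)
    have T1: "1 \<le> (1+t)\<^sup>2" using t by (simp add: one_le_power)
    have T2: "t\<^sup>2 \<le> (1+t)\<^sup>2" using t by (intro power_mono) auto
    have X0: "0 \<le> (1 + rr) * n0\<^sup>2 + n1\<^sup>2" using rr by simp
    have "n0\<^sup>2 \<le> 1 * ((1 + rr) * n0\<^sup>2 + n1\<^sup>2)" using X1 by simp
    also have "\<dots> \<le> (1+t)\<^sup>2 * ((1 + rr) * n0\<^sup>2 + n1\<^sup>2)" using T1 X0 by (intro mult_right_mono) auto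
    finally have A: "n0\<^sup>2 \<le> (1+t)\<^sup>2 * ((1 + rr) * n0\<^sup>2 + n1\<^sup>2)" .
    have "(n1\<^sup>2 + rr * n0\<^sup>2) * t\<^sup>2 \<le> ((1 + rr) * n0\<^sup>2 + n1\<^sup>2) * (1+t)\<^sup>2"
      using X2 T2 X0 by (intro mult_mono) auto
    then have "K * ((n1\<^sup>2 + rr * n0\<^sup>2) * t\<^sup>2) \<le> K * (((1 + rr) * n0\<^sup>2 + n1\<^sup>2) * (1+t)\<^sup>2)"
      using K by (rule mult_left_mono)
    then have B: "K * (n1\<^sup>2 + rr * n0\<^sup>2) * t\<^sup>2 \<le> K * ((1+t)\<^sup>2 * ((1 + rr) * n0\<^sup>2 + n1\<^sup>2))"
      by (simp add: mult_ac)
    show ?thesis using A B by simp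
  qed
  also have "\<dots> = (2 + 2 * Kc (a\<^sup>2) (b\<^sup>2)) * (1+t)\<^sup>2 * ((1 + (norm \<xi>)\<^sup>2) * (norm (U0 \<xi>))\<^sup>2 + (norm (U1 \<xi>))\<^sup>2)"
    by (simp add: K_def n0_def n1_def rr_def algebra_simps)
  finally show ?thesis .
qed

lemma decay_pointwise:
  assumes sol: "is_solution a b \<theta> U0 U1 U V" and ab: "a\<^sup>2 > 0" "b\<^sup>2 > a\<^sup>2"
    and th: "0 \<le> \<theta>" "\<theta> \<le> 1" and s: "0 \<le> s" and xi: "\<xi> \<noteq> 0" and t: "t \<ge> 0"
  shows "(sym_pow (s+1) \<xi>)\<^sup>2 * (cmod (U t \<xi> $ k))\<^sup>2 + (sym_pow s \<xi>)\<^sup>2 * (cmod (V t \<xi> $ k))\<^sup>2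
    \<le> Kc (a\<^sup>2) (b\<^sup>2) * Kw a \<theta> s * (1+t) powr (- s / max (1-\<theta>) \<theta>) *
       ((1 + (norm \<xi>)\<^sup>2) powr s * ((1 + (norm \<xi>)\<^sup>2) * (norm (U0 \<xi>))\<^sup>2 + (norm (U1 \<xi>))\<^sup>2))"
proof -
  define K where "K = Kc (a\<^sup>2) (b\<^sup>2)"
  have K: "0 \<le> K" unfolding K_def by (rule Kc_nonneg) (use ab in auto)
  define rr where "rr = (norm \<xi>)\<^sup>2"
  have rr: "0 \<le> rr" by (simp add: rr_def)
  define n0 where "n0 = norm (U0 \<xi>)"
  define n1 where "n1 = norm (U1 \<xi>)"
  define e where "e = exp (- delta a \<theta> \<xi> * t / 3)"
  define w where "w = (sym_pow s \<xi>)\<^sup>2"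
  have w: "0 \<le> w" by (simp add: w_def)
  have sp: "(sym_pow (s+1) \<xi>)\<^sup>2 = rr * w"
  proof -
    have "sym_pow (s+1) \<xi> = norm \<xi> * sym_pow s \<xi>"
      using xi s by (simp add: sym_pow_def powr_add)
    then show ?thesis by (simp add: rr_def w_def power_mult_distrib)
  qed
  note dc = delta_conds[OF ab(1) th xi]
  have P: "rr * (cmod (U t \<xi> $ k))\<^sup>2 + (cmod (V t \<xi> $ k))\<^sup>2 \<le> K * e * (n1\<^sup>2 + rr * n0\<^sup>2)"
    unfolding rr_def K_def e_def n0_def n1_def by (rule pointwise[OF sol ab xi t dc])
  have W: "w * e \<le> Kw a \<theta> s * (1+t) powr (- s / max (1-\<theta>) \<theta>) * (1 + rr) powr s"
    unfolding w_def e_def rr_def by (rule weight[OF ab(1) th s t xi])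
  have N: "n1\<^sup>2 + rr * n0\<^sup>2 \<le> (1 + rr) * n0\<^sup>2 + n1\<^sup>2" by (simp add: algebra_simps)
  have "(sym_pow (s+1) \<xi>)\<^sup>2 * (cmod (U t \<xi> $ k))\<^sup>2 + (sym_pow s \<xi>)\<^sup>2 * (cmod (V t \<xi> $ k))\<^sup>2
      = w * (rr * (cmod (U t \<xi> $ k))\<^sup>2 + (cmod (V t \<xi> $ k))\<^sup>2)" unfolding sp by (simp add: w_def algebra_simps)
  also have "\<dots> \<le> w * (K * e * (n1\<^sup>2 + rr * n0\<^sup>2))" using P w by (rule mult_left_mono)
  also have "\<dots> = K * (w * e) * (n1\<^sup>2 + rr * n0\<^sup>2)" by (simp add: algebra_simps)
  also have "\<dots> \<le> K * (Kw a \<theta> s * (1+t) powr (- s / max (1-\<theta>) \<theta>) * (1 + rr) powr s) * ((1 + rr) * n0\<^sup>2 + n1\<^sup>2)"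
  proof (rule mult_mono[OF mult_left_mono[OF W K] N])
    have "1 \<le> Kw a \<theta> s" by (simp add: Kw_def)
    then show "0 \<le> K * (Kw a \<theta> s * (1+t) powr (- s / max (1-\<theta>) \<theta>) * (1 + rr) powr s)"
      using K by simp
    show "0 \<le> n1\<^sup>2 + rr * n0\<^sup>2" using rr by simp
  qed
  also have "\<dots> = Kc (a\<^sup>2) (b\<^sup>2) * Kw a \<theta> s * (1+t) powr (- s / max (1-\<theta>) \<theta>) *
       ((1 + (norm \<xi>)\<^sup>2) powr s * ((1 + (norm \<xi>)\<^sup>2) * (norm (U0 \<xi>))\<^sup>2 + (norm (U1 \<xi>))\<^sup>2))"
    by (simp add: K_def rr_def n0_def n1_def algebra_simps)
  finally show ?thesis .
qed


lemma int_bound_AE: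
  fixes f B :: "real^3 \<Rightarrow> real"
  assumes iB: "integrable lborel B" and mf: "f \<in> borel_measurable lborel"
    and le: "AE \<xi> in lborel. 0 \<le> f \<xi> \<and> f \<xi> \<le> c * B \<xi>"
  shows "integrable lborel f" "integral\<^sup>L lborel f \<le> c * integral\<^sup>L lborel B"
proof -
  have icB: "integrable lborel (\<lambda>\<xi>. c * B \<xi>)" using iB by simp
  show i: "integrable lborel f"
  proof (rule Bochner_Integration.integrable_bound[OF icB mf])
    show "AE \<xi> in lborel. norm (f \<xi>) \<le> norm (c * B \<xi>)"
      using le by eventually_elim auto
  qed
  have "integral\<^sup>L lborel f \<le> integral\<^sup>L lborel (\<lambda>\<xi>. c * B \<xi>)"
    by (rule integral_mono_AE[OF i icB]) (use le in \<open>eventually_elim, auto\<close>)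
  then show "integral\<^sup>L lborel f \<le> c * integral\<^sup>L lborel B" by simp
qed

lemma sqrt_add_le: "0 \<le> x \<Longrightarrow> 0 \<le> y \<Longrightarrow> sqrt x + sqrt y \<le> sqrt (2 * (x + y))"
proof -
  assume "0 \<le> x" "0 \<le> y"
  have "(sqrt x + sqrt y)\<^sup>2 \<le> 2 * (sqrt x)\<^sup>2 + 2 * (sqrt y)\<^sup>2" by (rule sq_sum_le)
  also have "\<dots> = 2 * (x + y)" using \<open>0 \<le> x\<close> \<open>0 \<le> y\<close> by simp
  finally show ?thesis by (rule real_le_rsqrt)
qed


theorem theorem3p4:
  fixes a b \<theta> s :: real
  assumes "b\<^sup>2 > a\<^sup>2" and "a\<^sup>2 > 0" and "0 \<le> \<theta>" and "\<theta> \<le> 1" and "0 \<le> s"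
  shows "\<exists>C. \<forall>U0 U1 U V.
    (\<forall>j. in_Hs (s + 1) (\<lambda>\<xi>. U0 \<xi> $ j) \<and> in_Hs s (\<lambda>\<xi>. U1 \<xi> $ j)) \<and>
    is_solution a b \<theta> U0 U1 U V \<longrightarrow>
    (\<forall>t\<ge>0. \<forall>k::3.
       in_Hs 0 (\<lambda>\<xi>. U t \<xi> $ k) \<and>
       Hs_norm 0 (\<lambda>\<xi>. U t \<xi> $ k)
         \<le> C * (1 + t) * (\<Sum>j\<in>UNIV. Hs_norm 1 (\<lambda>\<xi>. U0 \<xi> $ j) + Hs_norm 0 (\<lambda>\<xi>. U1 \<xi> $ j)) \<and>
       in_dotHs (s + 1) (\<lambda>\<xi>. U t \<xi> $ k) \<and> in_dotHs s (\<lambda>\<xi>. V t \<xi> $ k) \<and>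
       D_norm (s + 1) (\<lambda>\<xi>. U t \<xi> $ k) + D_norm s (\<lambda>\<xi>. V t \<xi> $ k)
         \<le> C * (1 + t) powr (- s / (2 * max (1 - \<theta>) \<theta>)) *
           (\<Sum>j\<in>UNIV. Hs_norm (s + 1) (\<lambda>\<xi>. U0 \<xi> $ j) + Hs_norm s (\<lambda>\<xi>. U1 \<xi> $ j)))"
proof -
  have ab: "a\<^sup>2 > 0" "b\<^sup>2 > a\<^sup>2" using assms by auto
  have b2: "b\<^sup>2 > 0" using ab by (meson less_trans)
  have th: "0 \<le> \<theta>" "\<theta> \<le> 1" and s: "0 \<le> s" using assms by auto
  define K1 where "K1 = 2 + 2 * Kc (a\<^sup>2) (b\<^sup>2)"
  define K2 where "K2 = Kc (a\<^sup>2) (b\<^sup>2) * Kw a \<theta> s"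
  define C where "C = max (sqrt K1) (sqrt (2 * K2))"
  have Kc0: "0 \<le> Kc (a\<^sup>2) (b\<^sup>2)" by (rule Kc_nonneg) (use ab in auto)
  have K1: "0 \<le> K1" using Kc0 by (simp add: K1_def)
  have K2: "0 \<le> K2" using Kc0 by (simp add: K2_def Kw_def)
  show ?thesis
  proof (rule exI[of _ C], (rule allI)+, rule impI)
    fix U0 U1 :: "real^3 \<Rightarrow> complex^3" and U V :: "real \<Rightarrow> real^3 \<Rightarrow> complex^3"
    assume H: "(\<forall>j. in_Hs (s + 1) (\<lambda>\<xi>. U0 \<xi> $ j) \<and> in_Hs s (\<lambda>\<xi>. U1 \<xi> $ j)) \<and> is_solution a b \<theta> U0 U1 U V"
    then have sol: "is_solution a b \<theta> U0 U1 U V" by simp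
    have m0: "\<And>j. (\<lambda>\<xi>. U0 \<xi> $ j) \<in> borel_measurable lborel" and m1: "\<And>j. (\<lambda>\<xi>. U1 \<xi> $ j) \<in> borel_measurable lborel"
      and i0: "\<And>j. integrable lborel (\<lambda>\<xi>. (1 + (norm \<xi>)\<^sup>2) powr (s + 1) * (cmod (U0 \<xi> $ j))\<^sup>2)"
      and i1: "\<And>j. integrable lborel (\<lambda>\<xi>. (1 + (norm \<xi>)\<^sup>2) powr s * (cmod (U1 \<xi> $ j))\<^sup>2)"
      using H by (auto simp: in_Hs_def)
    have i0': "\<And>j. integrable lborel (\<lambda>\<xi>. (1 + (norm \<xi>)\<^sup>2) powr (0 + 1) * (cmod (U0 \<xi> $ j))\<^sup>2)"
      by (rule int_lower[OF i0 m0]) (use s in auto)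
    have i1': "\<And>j. integrable lborel (\<lambda>\<xi>. (1 + (norm \<xi>)\<^sup>2) powr 0 * (cmod (U1 \<xi> $ j))\<^sup>2)"
      by (rule int_lower[OF i1 m1]) (use s in auto)
    note D1 = data_int[OF i0' i1']
    note D2 = data_int[OF i0 i1]
    define S1 where "S1 = (\<Sum>j\<in>UNIV. Hs_norm 1 (\<lambda>\<xi>. U0 \<xi> $ j) + Hs_norm 0 (\<lambda>\<xi>. U1 \<xi> $ j))"
    define S2 where "S2 = (\<Sum>j\<in>UNIV. Hs_norm (s + 1) (\<lambda>\<xi>. U0 \<xi> $ j) + Hs_norm s (\<lambda>\<xi>. U1 \<xi> $ j))"
    have S1: "0 \<le> S1" unfolding S1_def by (intro sum_nonneg add_nonneg_nonneg) (auto simp: Hs_norm_def)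
    have S2: "0 \<le> S2" unfolding S2_def by (intro sum_nonneg add_nonneg_nonneg) (auto simp: Hs_norm_def)
    define B1 where "B1 \<xi> = (1 + (norm \<xi>)\<^sup>2) powr 0 * ((1 + (norm \<xi>)\<^sup>2) * (norm (U0 \<xi>))\<^sup>2 + (norm (U1 \<xi>))\<^sup>2)" for \<xi> :: "real^3"
    define B2 where "B2 \<xi> = (1 + (norm \<xi>)\<^sup>2) powr s * ((1 + (norm \<xi>)\<^sup>2) * (norm (U0 \<xi>))\<^sup>2 + (norm (U1 \<xi>))\<^sup>2)" for \<xi> :: "real^3"
    have iB1: "integrable lborel B1" and IB1: "integral\<^sup>L lborel B1 \<le> S1\<^sup>2"
      using D1 unfolding B1_def[abs_def] S1_def by simp_all
    have iB2: "integrable lborel B2" and IB2: "integral\<^sup>L lborel B2 \<le> S2\<^sup>2"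
      using D2 unfolding B2_def[abs_def] S2_def by simp_all
    show "\<forall>t\<ge>0. \<forall>k::3.
       in_Hs 0 (\<lambda>\<xi>. U t \<xi> $ k) \<and>
       Hs_norm 0 (\<lambda>\<xi>. U t \<xi> $ k)
         \<le> C * (1 + t) * (\<Sum>j\<in>UNIV. Hs_norm 1 (\<lambda>\<xi>. U0 \<xi> $ j) + Hs_norm 0 (\<lambda>\<xi>. U1 \<xi> $ j)) \<and>
       in_dotHs (s + 1) (\<lambda>\<xi>. U t \<xi> $ k) \<and> in_dotHs s (\<lambda>\<xi>. V t \<xi> $ k) \<and>
       D_norm (s + 1) (\<lambda>\<xi>. U t \<xi> $ k) + D_norm s (\<lambda>\<xi>. V t \<xi> $ k)
         \<le> C * (1 + t) powr (- s / (2 * max (1 - \<theta>) \<theta>)) *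
           (\<Sum>j\<in>UNIV. Hs_norm (s + 1) (\<lambda>\<xi>. U0 \<xi> $ j) + Hs_norm s (\<lambda>\<xi>. U1 \<xi> $ j))"
    proof (intro allI impI)
      fix t :: real and k :: 3 assume t: "0 \<le> t"
      have [measurable]: "(\<lambda>\<xi>. U t \<xi> $ k) \<in> borel_measurable lborel" "(\<lambda>\<xi>. V t \<xi> $ k) \<in> borel_measurable lborel"
        using sol_meas[OF sol ab(1) b2 t m0 m1] by auto
      have [measurable]: "sym_pow r \<in> borel_measurable lborel" for r by (rule sym_pow_meas)
      have L1: "integrable lborel (\<lambda>\<xi>. (1 + (norm \<xi>)\<^sup>2) powr 0 * (cmod (U t \<xi> $ k))\<^sup>2)"
        and L2: "(LINT \<xi>|lborel. (1 + (norm \<xi>)\<^sup>2) powr 0 * (cmod (U t \<xi> $ k))\<^sup>2) \<le> (K1 * (1+t)\<^sup>2) * integral\<^sup>L lborel B1"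
      proof -
        have "AE \<xi> in lborel. 0 \<le> (1 + (norm \<xi>)\<^sup>2) powr 0 * (cmod (U t \<xi> $ k))\<^sup>2 \<and>
            (1 + (norm \<xi>)\<^sup>2) powr 0 * (cmod (U t \<xi> $ k))\<^sup>2 \<le> (K1 * (1+t)\<^sup>2) * B1 \<xi>"
          using AE_nz
        proof eventually_elim
          case (elim \<xi>)
          have "(cmod (U t \<xi> $ k))\<^sup>2 \<le> K1 * (1+t)\<^sup>2 * ((1 + (norm \<xi>)\<^sup>2) * (norm (U0 \<xi>))\<^sup>2 + (norm (U1 \<xi>))\<^sup>2)"
            unfolding K1_def by (rule L2_pointwise[OF sol ab elim t])
          then show ?case by (simp add: B1_def add_pos_nonneg)
        qed
        moreover have "(\<lambda>\<xi>. (1 + (norm \<xi>)\<^sup>2) powr 0 * (cmod (U t \<xi> $ k))\<^sup>2) \<in> borel_measurable lborel"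
          by measurable
        ultimately show "integrable lborel (\<lambda>\<xi>. (1 + (norm \<xi>)\<^sup>2) powr 0 * (cmod (U t \<xi> $ k))\<^sup>2)"
          "(LINT \<xi>|lborel. (1 + (norm \<xi>)\<^sup>2) powr 0 * (cmod (U t \<xi> $ k))\<^sup>2) \<le> (K1 * (1+t)\<^sup>2) * integral\<^sup>L lborel B1"
          using int_bound_AE[OF iB1] by blast+
      qed
      have "in_Hs 0 (\<lambda>\<xi>. U t \<xi> $ k)" using L1 by (simp add: in_Hs_def)
      moreover have "Hs_norm 0 (\<lambda>\<xi>. U t \<xi> $ k) \<le> C * (1 + t) * S1"
      proof -
        have "(LINT \<xi>|lborel. (1 + (norm \<xi>)\<^sup>2) powr 0 * (cmod (U t \<xi> $ k))\<^sup>2) \<le> (K1 * (1+t)\<^sup>2) * S1\<^sup>2"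
        proof -
          have "0 \<le> K1 * (1+t)\<^sup>2" using K1 by simp
          then have "(K1 * (1+t)\<^sup>2) * integral\<^sup>L lborel B1 \<le> (K1 * (1+t)\<^sup>2) * S1\<^sup>2"
            using IB1 by (rule mult_left_mono[rotated])
          then show ?thesis using L2 by linarith
        qed
        then have "Hs_norm 0 (\<lambda>\<xi>. U t \<xi> $ k) \<le> sqrt ((K1 * (1+t)\<^sup>2) * S1\<^sup>2)"
          unfolding Hs_norm_def by (rule real_sqrt_le_mono)
        also have "\<dots> = sqrt K1 * (1+t) * S1" using t S1 by (simp add: real_sqrt_mult)
        also have "\<dots> \<le> C * (1+t) * S1" using t S1 by (intro mult_right_mono) (auto simp: C_def)
        finally show ?thesis .
      qed
      moreover
      define p where "p = s / max (1-\<theta>) \<theta>"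
      define P where "P \<xi> = (sym_pow (s+1) \<xi>)\<^sup>2 * (cmod (U t \<xi> $ k))\<^sup>2" for \<xi>
      define Q where "Q \<xi> = (sym_pow s \<xi>)\<^sup>2 * (cmod (V t \<xi> $ k))\<^sup>2" for \<xi>
      have mP: "P \<in> borel_measurable lborel" unfolding P_def[abs_def] by measurable
      have mQ: "Q \<in> borel_measurable lborel" unfolding Q_def[abs_def] by measurable
      have mPQ: "(\<lambda>\<xi>. P \<xi> + Q \<xi>) \<in> borel_measurable lborel" using mP mQ by measurable
      have AEPQ: "AE \<xi> in lborel. 0 \<le> P \<xi> \<and> 0 \<le> Q \<xi> \<and> P \<xi> + Q \<xi> \<le> (K2 * (1+t) powr (-p)) * B2 \<xi>"
        using AE_nz
      proof eventually_elim
        case (elim \<xi>)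
        have eqp: "(1+t) powr (-p) = (1+t) powr (- s / max (1-\<theta>) \<theta>)" by (simp add: p_def)
        have "P \<xi> + Q \<xi> \<le> Kc (a\<^sup>2) (b\<^sup>2) * Kw a \<theta> s * (1+t) powr (- s / max (1-\<theta>) \<theta>) * B2 \<xi>"
          unfolding P_def Q_def B2_def by (rule decay_pointwise[OF sol ab th s elim t])
        then have "P \<xi> + Q \<xi> \<le> K2 * (1+t) powr (-p) * B2 \<xi>" unfolding K2_def eqp .
        moreover have "0 \<le> P \<xi>" "0 \<le> Q \<xi>" by (simp_all add: P_def Q_def)
        ultimately show ?case by simp
      qed
      have AP: "AE \<xi> in lborel. 0 \<le> P \<xi> \<and> P \<xi> \<le> (K2 * (1+t) powr (-p)) * B2 \<xi>"
        using AEPQ by eventually_elim auto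
      have AQ: "AE \<xi> in lborel. 0 \<le> Q \<xi> \<and> Q \<xi> \<le> (K2 * (1+t) powr (-p)) * B2 \<xi>"
        using AEPQ by eventually_elim auto
      have APQ: "AE \<xi> in lborel. 0 \<le> P \<xi> + Q \<xi> \<and> P \<xi> + Q \<xi> \<le> (K2 * (1+t) powr (-p)) * B2 \<xi>"
        using AEPQ by eventually_elim auto
      note iP = int_bound_AE(1)[OF iB2 mP AP]
      note iQ = int_bound_AE(1)[OF iB2 mQ AQ]
      note IPQ = int_bound_AE(2)[OF iB2 mPQ APQ]
      have "in_dotHs (s + 1) (\<lambda>\<xi>. U t \<xi> $ k)" using iP by (simp add: in_dotHs_def P_def[abs_def])
      moreover have "in_dotHs s (\<lambda>\<xi>. V t \<xi> $ k)" using iQ by (simp add: in_dotHs_def Q_def[abs_def])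
      moreover have "D_norm (s + 1) (\<lambda>\<xi>. U t \<xi> $ k) + D_norm s (\<lambda>\<xi>. V t \<xi> $ k)
         \<le> C * (1 + t) powr (- s / (2 * max (1 - \<theta>) \<theta>)) * S2"
      proof -
        have "D_norm (s + 1) (\<lambda>\<xi>. U t \<xi> $ k) + D_norm s (\<lambda>\<xi>. V t \<xi> $ k) = sqrt (integral\<^sup>L lborel P) + sqrt (integral\<^sup>L lborel Q)"
          by (simp add: D_norm_def P_def[abs_def] Q_def[abs_def])
        also have "\<dots> \<le> sqrt (2 * (integral\<^sup>L lborel P + integral\<^sup>L lborel Q))"
          by (rule sqrt_add_le) (auto simp: P_def Q_def intro!: integral_nonneg_AE)
        also have "integral\<^sup>L lborel P + integral\<^sup>L lborel Q = integral\<^sup>L lborel (\<lambda>\<xi>. P \<xi> + Q \<xi>)"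
          using iP iQ by simp
        also have "sqrt (2 * \<dots>) \<le> sqrt (2 * ((K2 * (1+t) powr (-p)) * S2\<^sup>2))"
        proof -
          have "0 \<le> K2 * (1+t) powr (-p)" using K2 by simp
          then have "(K2 * (1+t) powr (-p)) * integral\<^sup>L lborel B2 \<le> (K2 * (1+t) powr (-p)) * S2\<^sup>2"
            using IB2 by (rule mult_left_mono[rotated])
          then show ?thesis using IPQ by simp
        qed
        also have "\<dots> = sqrt (2 * K2) * sqrt ((1+t) powr (-p)) * S2"
          using S2 by (simp add: real_sqrt_mult mult_ac)
        also have "sqrt ((1+t) powr (-p)) = (1+t) powr (- s / (2 * max (1 - \<theta>) \<theta>))"
          using t by (simp add: powr_half_sqrt_powr[symmetric] p_def mult.commute)
        also have "sqrt (2 * K2) * (1+t) powr (- s / (2 * max (1 - \<theta>) \<theta>)) * S2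
            \<le> C * (1+t) powr (- s / (2 * max (1 - \<theta>) \<theta>)) * S2"
          using S2 by (intro mult_right_mono) (auto simp: C_def)
        finally show ?thesis .
      qed
      ultimately show "in_Hs 0 (\<lambda>\<xi>. U t \<xi> $ k) \<and>
       Hs_norm 0 (\<lambda>\<xi>. U t \<xi> $ k)
         \<le> C * (1 + t) * (\<Sum>j\<in>UNIV. Hs_norm 1 (\<lambda>\<xi>. U0 \<xi> $ j) + Hs_norm 0 (\<lambda>\<xi>. U1 \<xi> $ j)) \<and>
       in_dotHs (s + 1) (\<lambda>\<xi>. U t \<xi> $ k) \<and> in_dotHs s (\<lambda>\<xi>. V t \<xi> $ k) \<and>
       D_norm (s + 1) (\<lambda>\<xi>. U t \<xi> $ k) + D_norm s (\<lambda>\<xi>. V t \<xi> $ k)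
         \<le> C * (1 + t) powr (- s / (2 * max (1 - \<theta>) \<theta>)) *
           (\<Sum>j\<in>UNIV. Hs_norm (s + 1) (\<lambda>\<xi>. U0 \<xi> $ j) + Hs_norm s (\<lambda>\<xi>. U1 \<xi> $ j))"
        unfolding S1_def[symmetric] S2_def[symmetric] by simp
    qed
  qed
qed


end
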